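(* Let $(\mathcal K,[\cdot,\cdot])$ be a Krein space and let $T$ be a closed, densely defined linear operator in $\mathcal K$ such that $\rho(T^{[*]}T)\neq\emptyset$ and $\rho(TT^{[*]})\neq\emptyset$ (so both $T^{[*]}T$ and $TT^{[*]}$ are selfadjoint). Then, with $\mathbb R^+=(0,\infty)$ and $\mathbb R^-=(-\infty,0)$: (i) $\sigma_{ap}(T^{[*]}T)\setminus\{0\}=\sigma_{ap}(TT^{[*]})\setminus\{0\}$; (ii) $\sigma_{++}(T^{[*]}T)\cap\mathbb R^+=\sigma_{++}(TT^{[*]})\cap\mathbb R^+$ and $\sigma_{--}(T^{[*]}T)\cap\mathbb R^+=\sigma_{--}(TT^{[*]})\cap\mathbb R^+$; (iii) $\sigma_{++}(T^{[*]}T)\cap\mathbb R^-=\sigma_{--}(TT^{[*]})\cap\mathbb R^-$ and $\sigma_{--}(T^{[*]}T)\cap\mathbb R^-=\sigma_{++}(TT^{[*]})\cap\mathbb R^-$; (iv) $\sigma_{\pi_+}(T^{[*]}T)\cap\mathbb R^+=\sigma_{\pi_+}(TT^{[*]})\cap\mathbb R^+$ and $\sigma_{\pi_-}(T^{[*]}T)\cap\mathbb R^+=\sigma_{\pi_-}(TT^{[*]})\cap\mathbb R^+$; (v) $\sigma_{\pi_+}(T^{[*]}T)\cap\mathbb R^-=\sigma_{\pi_-}(TT^{[*]})\cap\mathbb R^-$ and $\sigma_{\pi_-}(T^{[*]}T)\cap\mathbb R^-=\sigma_{\pi_+}(TT^{[*]})\cap\mathbb R^-$.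
   Context: $\mathcal K$ carries a Banach norm $\|\cdot\|$ for which $[\cdot,\cdot]$ is continuous; $T^{[*]}$ is the Krein space adjoint of $T$; products have natural domains. For a closed operator $S$, $\sigma_{ap}(S)$ is the set of $\lambda$ for which there is $(x_n)\subset\operatorname{dom}S$ with $\|x_n\|=1$ and $(S-\lambda)x_n\to0$. For a selfadjoint operator $S$ in $\mathcal K$ (i.e. $S=S^{[*]}$): a point $\lambda\in\sigma(S)$ belongs to $\sigma_{++}(S)$ (resp. $\sigma_{--}(S)$), a spectral point of positive (resp. negative) type, if $\lambda\in\sigma_{ap}(S)$ and for every sequence $(x_n)\subset\operatorname{dom}S$ with $\|x_n\|=1$ and $(S-\lambda)x_n\to0$ one has $\liminf_n[x_n,x_n]>0$ (resp. $\limsup_n[x_n,x_n]<0$). A point $\lambda\in\sigma(S)$ belongs to $\sigma_{\pi_+}(S)$ (resp. $\sigma_{\pi_-}(S)$), a spectral point of type $\pi_+$ (resp. $\pi_-$), if $\lambda\in\sigma_{ap}(S)$ and for every sequence $(x_n)\subset\operatorname{dom}S$ with $\|x_n\|=1$, $x_n\rightharpoonup0$ weakly and $(S-\lambda)x_n\to0$ one has $\liminf_n[x_n,x_n]>0$ (resp. $\limsup_n[x_n,x_n]<0$). *)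

theory Defs
  imports "HOL-Analysis.Analysis"
begin

class complex_vector = real_vector +
  fixes scaleC :: "complex \<Rightarrow> 'a \<Rightarrow> 'a"  (infixr \<open>*\<^sub>C\<close> 75)
  assumes scaleC_add_right: "a *\<^sub>C (x + y) = a *\<^sub>C x + a *\<^sub>C y"
    and scaleC_add_left: "(a + b) *\<^sub>C x = a *\<^sub>C x + b *\<^sub>C x"
    and scaleC_scaleC: "a *\<^sub>C (b *\<^sub>C x) = (a * b) *\<^sub>C x"
    and scaleC_one: "1 *\<^sub>C x = x"
    and scaleR_scaleC: "r *\<^sub>R x = (complex_of_real r) *\<^sub>C x"

class complex_normed_vector = complex_vector + real_normed_vector +
  assumes norm_scaleC: "norm (a *\<^sub>C x) = cmod a * norm x"

definition sesquilinear :: "('a::complex_vector \<Rightarrow> 'a \<Rightarrow> complex) \<Rightarrow> bool" where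
  "sesquilinear ip \<longleftrightarrow>
     (\<forall>x y z. ip (x + y) z = ip x z + ip y z) \<and>
     (\<forall>a x y. ip (a *\<^sub>C x) y = a * ip x y) \<and>
     (\<forall>x y. ip y x = cnj (ip x y))"

text \<open>(K,[.,.]) is a Krein space whose topology is given by the Banach norm of K:
  there is a fundamental symmetry J (linear, J J = I, J [.,.]-symmetric) such that
  the J-inner product [J x, y] is a Hilbert space inner product whose norm is
  equivalent to the given norm (completeness comes from the class banach).
  Then K = ker(J-I) [+] ker(J+I) is a fundamental decomposition.\<close>
definition krein_space :: "('a::complex_normed_vector \<Rightarrow> 'a \<Rightarrow> complex) \<Rightarrow> bool" where
  "krein_space ip \<longleftrightarrow> sesquilinear ip \<and>
     (\<exists>J::'a \<Rightarrow> 'a.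
        (\<forall>x y. J (x + y) = J x + J y) \<and> (\<forall>a x. J (a *\<^sub>C x) = a *\<^sub>C J x) \<and>
        (\<forall>x. J (J x) = x) \<and> (\<forall>x y. ip (J x) y = ip x (J y)) \<and>
        (\<exists>c C. 0 < c \<and> (\<forall>x. c * (norm x)\<^sup>2 \<le> Re (ip (J x) x) \<and>
                              Re (ip (J x) x) \<le> C * (norm x)\<^sup>2)))"

section \<open>(Unbounded) linear operators, represented by their graphs\<close>

definition linear_operator :: "('a::complex_vector \<times> 'a) set \<Rightarrow> bool" where
  "linear_operator T \<longleftrightarrow>
     (0, 0) \<in> T \<and>
     (\<forall>x y u v. (x, y) \<in> T \<longrightarrow> (u, v) \<in> T \<longrightarrow> (x + u, y + v) \<in> T) \<and>
     (\<forall>a x y. (x, y) \<in> T \<longrightarrow> (a *\<^sub>C x, a *\<^sub>C y) \<in> T) \<and>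
     (\<forall>y. (0, y) \<in> T \<longrightarrow> y = 0)"

text \<open>dom T is \<open>Domain T\<close>; T is closed iff its graph is closed in K x K;
  densely defined iff \<open>closure (Domain T) = UNIV\<close>.\<close>

definition krein_adjoint ::
  "('a \<Rightarrow> 'a \<Rightarrow> complex) \<Rightarrow> ('a \<times> 'a) set \<Rightarrow> ('a \<times> 'a) set" where
  "krein_adjoint ip T = {(y, z). \<forall>(x, w) \<in> T. ip w y = ip x z}"

text \<open>Products with natural domains: \<open>S \<cdot> T\<close> (first T, then S) is the relational
  composition \<open>T O S\<close>.  Thus T^[*] T = \<open>T O krein_adjoint ip T\<close> and
  T T^[*] = \<open>krein_adjoint ip T O T\<close>.\<close>

definition resolvent_set :: "('a::complex_normed_vector \<times> 'a) set \<Rightarrow> complex set" where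
  "resolvent_set S = {l. (\<forall>w. \<exists>x y. (x, y) \<in> S \<and> y - l *\<^sub>C x = w) \<and>
                         (\<exists>C. \<forall>(x, y) \<in> S. norm x \<le> C * norm (y - l *\<^sub>C x))}"

definition spectrum_op :: "('a::complex_normed_vector \<times> 'a) set \<Rightarrow> complex set" where
  "spectrum_op S = - resolvent_set S"

definition approx_point_spectrum :: "('a::complex_normed_vector \<times> 'a) set \<Rightarrow> complex set" where
  "approx_point_spectrum S = {l. \<exists>x y. (\<forall>n. (x n, y n) \<in> S \<and> norm (x n) = 1) \<and>
                                    (\<lambda>n. y n - l *\<^sub>C x n) \<longlonglongrightarrow> 0}"

text \<open>Weak convergence to 0 (real continuous functionals suffice: they are the real
  parts of the complex ones).\<close>
definition weakly_to_zero :: "(nat \<Rightarrow> 'a::real_normed_vector) \<Rightarrow> bool" where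
  "weakly_to_zero x \<longleftrightarrow> (\<forall>f::'a \<Rightarrow> real. bounded_linear f \<longrightarrow> (\<lambda>n. f (x n)) \<longlonglongrightarrow> 0)"

definition spec_pos_type ::
  "('a::complex_normed_vector \<Rightarrow> 'a \<Rightarrow> complex) \<Rightarrow> ('a \<times> 'a) set \<Rightarrow> complex set" where
  "spec_pos_type ip S = {l \<in> spectrum_op S. l \<in> approx_point_spectrum S \<and>
     (\<forall>x y. (\<forall>n. (x n, y n) \<in> S \<and> norm (x n) = 1) \<longrightarrow> (\<lambda>n. y n - l *\<^sub>C x n) \<longlonglongrightarrow> 0 \<longrightarrow>
        liminf (\<lambda>n. ereal (Re (ip (x n) (x n)))) > 0)}"

definition spec_neg_type ::
  "('a::complex_normed_vector \<Rightarrow> 'a \<Rightarrow> complex) \<Rightarrow> ('a \<times> 'a) set \<Rightarrow> complex set" where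
  "spec_neg_type ip S = {l \<in> spectrum_op S. l \<in> approx_point_spectrum S \<and>
     (\<forall>x y. (\<forall>n. (x n, y n) \<in> S \<and> norm (x n) = 1) \<longrightarrow> (\<lambda>n. y n - l *\<^sub>C x n) \<longlonglongrightarrow> 0 \<longrightarrow>
        limsup (\<lambda>n. ereal (Re (ip (x n) (x n)))) < 0)}"

definition spec_pi_plus ::
  "('a::complex_normed_vector \<Rightarrow> 'a \<Rightarrow> complex) \<Rightarrow> ('a \<times> 'a) set \<Rightarrow> complex set" where
  "spec_pi_plus ip S = {l \<in> spectrum_op S. l \<in> approx_point_spectrum S \<and>
     (\<forall>x y. (\<forall>n. (x n, y n) \<in> S \<and> norm (x n) = 1) \<longrightarrow> weakly_to_zero x \<longrightarrow>
        (\<lambda>n. y n - l *\<^sub>C x n) \<longlonglongrightarrow> 0 \<longrightarrow>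
        liminf (\<lambda>n. ereal (Re (ip (x n) (x n)))) > 0)}"

definition spec_pi_minus ::
  "('a::complex_normed_vector \<Rightarrow> 'a \<Rightarrow> complex) \<Rightarrow> ('a \<times> 'a) set \<Rightarrow> complex set" where
  "spec_pi_minus ip S = {l \<in> spectrum_op S. l \<in> approx_point_spectrum S \<and>
     (\<forall>x y. (\<forall>n. (x n, y n) \<in> S \<and> norm (x n) = 1) \<longrightarrow> weakly_to_zero x \<longrightarrow>
        (\<lambda>n. y n - l *\<^sub>C x n) \<longlonglongrightarrow> 0 \<longrightarrow>
        limsup (\<lambda>n. ereal (Re (ip (x n) (x n)))) < 0)}"

definition pos_reals :: "complex set" where
  "pos_reals = complex_of_real ` {0<..}"

definition neg_reals :: "complex set" where
  "neg_reals = complex_of_real ` {..<0}"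

end

theory Submission
  imports Defs "HOL-Analysis.Analysis"
begin

lemma scaleC_zero_right[simp]: "a *\<^sub>C (0::'a::complex_vector) = 0"
  by (metis add_cancel_right_left scaleC_add_right)
lemma scaleC_zero_left[simp]: "0 *\<^sub>C (x::'a::complex_vector) = 0"
  by (metis of_real_0 scaleR_scaleC scaleR_zero_left)
lemma scaleC_of_real: "complex_of_real r *\<^sub>C (x::'a::complex_vector) = r *\<^sub>R x"
  by (simp add: scaleR_scaleC)
lemma scaleC_minus_right: "a *\<^sub>C (- x::'a::complex_vector) = - (a *\<^sub>C x)"
  by (metis add.inverse_unique add.right_inverse scaleC_add_right scaleC_zero_right)
lemma scaleC_diff_right: "a *\<^sub>C (x - y::'a::complex_vector) = a *\<^sub>C x - a *\<^sub>C y"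
  by (metis diff_conv_add_uminus scaleC_add_right scaleC_minus_right)
lemma scaleC_minus_left: "(- a) *\<^sub>C (x::'a::complex_vector) = - (a *\<^sub>C x)"
  by (metis add.inverse_unique add.right_inverse scaleC_add_left scaleC_zero_left)
lemma scaleC_diff_left: "(a - b) *\<^sub>C (x::'a::complex_vector) = a *\<^sub>C x - b *\<^sub>C x"
  by (metis diff_conv_add_uminus scaleC_add_left scaleC_minus_left)
lemma scaleC_minus1: "(-1) *\<^sub>C (x::'a::complex_vector) = - x"
  by (simp add: scaleC_minus_left scaleC_one)

context
  fixes s :: "'a::complex_vector \<Rightarrow> 'a \<Rightarrow> complex"
  assumes sq: "sesquilinear s"
begin

lemma sq_add_left: "s (x + y) z = s x z + s y z" using sq unfolding sesquilinear_def by blast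
lemma sq_scale_left: "s (a *\<^sub>C x) y = a * s x y" using sq unfolding sesquilinear_def by blast
lemma sq_conj: "s y x = cnj (s x y)" using sq unfolding sesquilinear_def by blast
lemma sq_add_right: "s z (x + y) = s z x + s z y"
  by (metis complex_cnj_add complex_cnj_cnj sq_add_left sq_conj)
lemma sq_scale_right: "s x (a *\<^sub>C y) = cnj a * s x y"
  by (metis complex_cnj_cnj complex_cnj_mult sq_conj sq_scale_left)
lemma sq_zero_left[simp]: "s 0 y = 0"
  by (metis add_cancel_right_left sq_add_left)
lemma sq_zero_right[simp]: "s x 0 = 0"
  by (metis complex_cnj_zero sq_conj sq_zero_left)
lemma sq_minus_left: "s (- x) y = - s x y"
  by (metis add.right_inverse add_eq_0_iff sq_add_left sq_zero_left)
lemma sq_minus_right: "s x (- y) = - s x y"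
  by (metis add.right_inverse add_eq_0_iff sq_add_right sq_zero_right)
lemma sq_diff_left: "s (x - y) z = s x z - s y z"
  using sq_add_left[of x "- y" z] sq_minus_left[of y z] by simp
lemma sq_diff_right: "s z (x - y) = s z x - s z y"
  using sq_add_right[of z x "- y"] sq_minus_right[of z y] by simp
lemma sq_real_diag: "cnj (s x x) = s x x"
  by (metis sq_conj)

lemma polarization:
  "4 * s x y = s (x + y) (x + y) - s (x - y) (x - y)
     + \<i> * s (x + \<i> *\<^sub>C y) (x + \<i> *\<^sub>C y) - \<i> * s (x - \<i> *\<^sub>C y) (x - \<i> *\<^sub>C y)"
proof -
  have e: "s (x + y) (x + y) = s x x + s x y + s y x + s y y"
    "s (x - y) (x - y) = s x x - s x y - s y x + s y y" for x y
    by (simp_all add: sq_add_left sq_add_right sq_diff_left sq_diff_right)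
  have f: "s x (\<i> *\<^sub>C y) = - \<i> * s x y" "s (\<i> *\<^sub>C y) x = \<i> * s y x"
         "s (\<i> *\<^sub>C y) (\<i> *\<^sub>C y) = s y y"
    by (simp_all add: sq_scale_left sq_scale_right)
  have g: "4 * b = (a + b + c + d) - (a - b - c + d) + \<i> * (a + - \<i> * b + \<i> * c + d)
     - \<i> * (a - - \<i> * b - \<i> * c + d)" for a b c d :: complex
    by (simp add: algebra_simps)
  have h: "s (x + \<i> *\<^sub>C y) (x + \<i> *\<^sub>C y) = s x x + - \<i> * s x y + \<i> * s y x + s y y"
    "s (x - \<i> *\<^sub>C y) (x - \<i> *\<^sub>C y) = s x x - - \<i> * s x y - \<i> * s y x + s y y"
    by (simp_all only: e f)
  show ?thesis unfolding e f by (rule g)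
qed

end


lemma cmod4: "cmod (a - b + \<i> * c - \<i> * d) \<le> cmod a + cmod b + cmod c + cmod d"
proof -
  have "cmod (a - b + \<i> * c - \<i> * d) \<le> cmod (a - b + \<i> * c) + cmod (\<i> * d)"
    by (rule norm_triangle_ineq4)
  also have "cmod (a - b + \<i> * c) \<le> cmod (a - b) + cmod (\<i> * c)" by (rule norm_triangle_ineq)
  also have "cmod (a - b) \<le> cmod a + cmod b" by (rule norm_triangle_ineq4)
  finally show ?thesis by (simp add: norm_mult)
qed

lemma sq_bound_aux:
  fixes s :: "'a::complex_normed_vector \<Rightarrow> 'a \<Rightarrow> complex"
  assumes sq: "sesquilinear s" and C: "\<And>z. cmod (s z z) \<le> C * (norm z)\<^sup>2" and C0: "C \<ge> 0"
  shows "cmod (s x y) \<le> C * (norm x + norm y)\<^sup>2"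
proof -
  have n: "norm (\<i> *\<^sub>C y) = norm y" by (simp add: norm_scaleC)
  have b: "cmod (s z z) \<le> C * (norm x + norm y)\<^sup>2" if "norm z \<le> norm x + norm y" for z
  proof -
    have "(norm z)\<^sup>2 \<le> (norm x + norm y)\<^sup>2" using that by (intro power_mono) auto
    then show ?thesis using C[of z] C0 by (meson mult_left_mono order_trans)
  qed
  have t1: "norm (x + y) \<le> norm x + norm y" by (rule norm_triangle_ineq)
  have t2: "norm (x - y) \<le> norm x + norm y" by (rule norm_triangle_ineq4)
  have t3: "norm (x + \<i> *\<^sub>C y) \<le> norm x + norm y" using norm_triangle_ineq[of x "\<i> *\<^sub>C y"] n by simp
  have t4: "norm (x - \<i> *\<^sub>C y) \<le> norm x + norm y" using norm_triangle_ineq4[of x "\<i> *\<^sub>C y"] n by simp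
  have "4 * cmod (s x y) = cmod (4 * s x y)" by (simp add: norm_mult)
  also have "\<dots> \<le> cmod (s (x + y) (x + y)) + cmod (s (x - y) (x - y))
     + cmod (s (x + \<i> *\<^sub>C y) (x + \<i> *\<^sub>C y)) + cmod (s (x - \<i> *\<^sub>C y) (x - \<i> *\<^sub>C y))"
    unfolding polarization[OF sq, of x y]
    by (rule cmod4)
  also have "\<dots> \<le> 4 * (C * (norm x + norm y)\<^sup>2)"
    using b[OF t1] b[OF t2] b[OF t3] b[OF t4] by simp
  finally show ?thesis by simp
qed

lemma sq_bound:
  fixes s :: "'a::complex_normed_vector \<Rightarrow> 'a \<Rightarrow> complex"
  assumes sq: "sesquilinear s" and C: "\<And>z. cmod (s z z) \<le> C * (norm z)\<^sup>2" and C0: "C \<ge> 0"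
  shows "cmod (s x y) \<le> 4 * C * norm x * norm y"
proof (cases "x = 0 \<or> y = 0")
  case True
  then show ?thesis using sq_zero_left[OF sq] sq_zero_right[OF sq] by auto
next
  case False
  then have nx: "norm x > 0" and ny: "norm y > 0" by auto
  define t where "t = sqrt (norm y / norm x)"
  have t: "t > 0" using nx ny unfolding t_def by simp
  have tt: "t * t = norm y / norm x" unfolding t_def using nx ny by simp
  have "s x y = s (complex_of_real t *\<^sub>C x) (complex_of_real (1/t) *\<^sub>C y)"
    using t by (simp add: sq_scale_left[OF sq] sq_scale_right[OF sq])
  also have "cmod \<dots> \<le> C * (norm (complex_of_real t *\<^sub>C x) + norm (complex_of_real (1/t) *\<^sub>C y))\<^sup>2"
    by (rule sq_bound_aux[OF sq C C0])
  also have "norm (complex_of_real t *\<^sub>C x) + norm (complex_of_real (1/t) *\<^sub>C y) = t * norm x + norm y / t"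
  proof -
    have "cmod (complex_of_real (1/t)) = \<bar>1/t\<bar>" by (rule norm_of_real)
    then have "cmod (complex_of_real (1/t)) = 1/t" using t by simp
    then show ?thesis using t by (simp only: norm_scaleC) (simp add: abs_of_pos)
  qed
  also have "(t * norm x + norm y / t)\<^sup>2 = 4 * norm x * norm y"
  proof -
    have "(t * norm x + norm y / t)\<^sup>2 = (t*t) * (norm x)\<^sup>2 + 2 * norm x * norm y + (norm y)\<^sup>2 / (t*t)"
      using t by (simp add: power2_eq_square field_simps)
    also have "\<dots> = 4 * norm x * norm y" unfolding tt using nx ny by (simp add: power2_eq_square field_simps)
    finally show ?thesis .
  qed
  finally show ?thesis by simp
qed

definition ipbound :: "('a::complex_normed_vector \<Rightarrow> 'a \<Rightarrow> complex) \<Rightarrow> real \<Rightarrow> bool" where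
  "ipbound ip K \<longleftrightarrow> K > 0 \<and> (\<forall>x y. cmod (ip x y) \<le> K * norm x * norm y)"

lemma krein_facts:
  fixes ip :: "'a::complex_normed_vector \<Rightarrow> 'a \<Rightarrow> complex"
  assumes "krein_space ip"
  shows "sesquilinear ip" "\<exists>K. ipbound ip K" "\<And>v. (\<forall>x. ip x v = 0) \<Longrightarrow> v = 0"
proof -
  show sq: "sesquilinear ip" using assms unfolding krein_space_def by blast
  obtain J c C where Jadd: "\<And>x y. J (x + y) = J x + J y" and Jsc: "\<And>a x. J (a *\<^sub>C x) = a *\<^sub>C J x"
    and JJ: "\<And>x. J (J x) = x" and Jsym: "\<And>x y. ip (J x) y = ip x (J y)"
    and c: "c > 0" and cb: "\<And>x. c * (norm x)\<^sup>2 \<le> Re (ip (J x) x)" and Cb: "\<And>x. Re (ip (J x) x) \<le> C * (norm x)\<^sup>2"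
    using assms unfolding krein_space_def by metis
  define h where "h x y = ip (J x) y" for x y
  have hsq: "sesquilinear h" unfolding sesquilinear_def h_def
  proof (intro conjI allI)
    show "ip (J (x + y)) z = ip (J x) z + ip (J y) z" for x y z by (simp add: Jadd sq_add_left[OF sq])
    show "ip (J (a *\<^sub>C x)) y = a * ip (J x) y" for a x y by (simp add: Jsc sq_scale_left[OF sq])
    show "ip (J y) x = cnj (ip (J x) y)" for x y
      using sq_conj[OF sq, of x "J y"] Jsym[of x y] by simp
  qed
  have hreal: "h z z = complex_of_real (Re (h z z))" for z
    using sq_real_diag[OF hsq, of z] by (simp add: complex_eq_iff)
  define C' where "C' = max C 0"
  have C0: "C' \<ge> 0" unfolding C'_def by simp
  have hC: "cmod (h z z) \<le> C' * (norm z)\<^sup>2" for z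
  proof -
    have "0 \<le> c * (norm z)\<^sup>2" using c by simp
    then have "Re (h z z) \<ge> 0" using cb[of z] unfolding h_def by linarith
    then have "cmod (h z z) = Re (h z z)" by (subst hreal) simp
    also have "\<dots> \<le> C * (norm z)\<^sup>2" using Cb unfolding h_def by simp
    also have "\<dots> \<le> C' * (norm z)\<^sup>2" unfolding C'_def by (intro mult_right_mono) auto
    finally show ?thesis .
  qed
  have hb: "cmod (h x y) \<le> 4 * C' * norm x * norm y" for x y by (rule sq_bound[OF hsq hC C0])
  have Jb: "norm (J x) \<le> sqrt (C' / c) * norm x" for x
  proof -
    have "c * (norm (J x))\<^sup>2 \<le> Re (ip (J (J x)) (J x))" by (rule cb)
    also have "\<dots> = Re (ip (J x) x)" using JJ[of x] Jsym[of "J x" "J x"] Jsym[of x x] by simp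
    also have "\<dots> \<le> C' * (norm x)\<^sup>2"
    proof -
      have "C * (norm x)\<^sup>2 \<le> C' * (norm x)\<^sup>2" unfolding C'_def by (intro mult_right_mono) auto
      then show ?thesis using Cb[of x] by linarith
    qed
    finally have "(norm (J x))\<^sup>2 \<le> (C' / c) * (norm x)\<^sup>2" using c by (simp add: field_simps)
    then have "norm (J x) \<le> sqrt ((C' / c) * (norm x)\<^sup>2)" by (simp add: real_le_rsqrt)
    then show ?thesis by (metis real_sqrt_mult real_sqrt_abs abs_norm_cancel)
  qed
  define K where "K = 4 * C' * sqrt (C' / c) + 1"
  have K0: "K > 0" unfolding K_def using C0 c by (intro add_nonneg_pos mult_nonneg_nonneg) auto
  show "\<exists>K. ipbound ip K"
  proof (intro exI[of _ K])
    have "cmod (ip x y) \<le> K * norm x * norm y" for x y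
    proof -
      have "ip x y = h (J x) y" unfolding h_def using JJ by simp
      then have "cmod (ip x y) \<le> 4 * C' * norm (J x) * norm y" using hb by simp
      also have "\<dots> \<le> 4 * C' * (sqrt (C' / c) * norm x) * norm y"
        using Jb C0 by (intro mult_right_mono mult_left_mono) auto
      also have "\<dots> = (4 * C' * sqrt (C' / c)) * (norm x * norm y)" by (simp only: mult_ac)
      also have "\<dots> \<le> K * (norm x * norm y)" unfolding K_def
        by (intro mult_right_mono) auto
      also have "\<dots> = K * norm x * norm y" by (simp only: mult_ac)
      finally show ?thesis .
    qed
    then show "ipbound ip K" unfolding ipbound_def using K0 by blast
  qed
  fix v assume "\<forall>x. ip x v = 0"
  then have "Re (ip (J v) v) = 0" by simp
  then have "c * (norm v)\<^sup>2 \<le> 0" using cb[of v] by simp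
  then show "v = 0" using c by (simp add: mult_le_0_iff)
qed


lemma baire_some_ball:
  fixes E :: "nat \<Rightarrow> 'a::{real_normed_vector,complete_space} set"
  assumes cl: "\<And>n. closed (E n)" and un: "(\<Union>n. E n) = UNIV"
  shows "\<exists>n x0 r. r > 0 \<and> ball x0 r \<subseteq> E n"
proof (rule ccontr)
  assume H: "\<not> ?thesis"
  have "euclidean interior_of \<Union>(range E) = {}"
  proof (rule Baire_category_alt)
    show "completely_metrizable_space (euclidean::'a topology) \<or> locally_compact_space (euclidean::'a topology) \<and> regular_space (euclidean::'a topology)"
      using completely_metrizable_space_euclidean by blast
    show "countable (range E)" by simp
    fix T assume "T \<in> range E"
    then obtain n where T: "T = E n" by auto
    have "interior T = {}"
    proof (rule ccontr)
      assume "interior T \<noteq> {}"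
      then obtain x where "x \<in> interior T" by auto
      then obtain r where "r > 0" "ball x r \<subseteq> T"
        using mem_interior by blast
      with H T show False by blast
    qed
    then show "closedin euclidean T \<and> euclidean interior_of T = {}"
      using cl T by (simp add: interior_of_openin)
  qed
  then have "interior (UNIV::'a set) = {}" using un by (simp add: interior_of_openin)
  then show False by simp
qed


lemma closed_graph_bounded:
  fixes F :: "'a::banach \<Rightarrow> 'b::banach"
  assumes add: "\<And>x y. F (x + y) = F x + F y"
    and scl: "\<And>r x. F (r *\<^sub>R x) = r *\<^sub>R F x"
    and clo: "\<And>w x v. w \<longlonglongrightarrow> x \<Longrightarrow> (\<lambda>k. F (w k)) \<longlonglongrightarrow> v \<Longrightarrow> F x = v"
  shows "bounded_linear F"
proof -
  have lin: "linear F" by (rule linearI) (use add scl in auto)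
  define E where "E n = closure {x. norm (F x) \<le> real n}" for n
  have "(\<Union>n. E n) = UNIV"
  proof -
    have "x \<in> E (nat \<lceil>norm (F x)\<rceil>)" for x
      unfolding E_def by (rule closure_subset[THEN subsetD]) (simp add: real_nat_ceiling_ge)
    then show ?thesis by blast
  qed
  then obtain n x0 r where r: "r > 0" and b: "ball x0 r \<subseteq> E n"
    using baire_some_ball[of E] unfolding E_def by auto
  have approx0: "\<exists>z'. norm (z - z') < e \<and> norm (F z') \<le> 2 * real n"
    if "norm z < r" "e > 0" for z e
  proof -
    have "x0 + z \<in> E n" "x0 \<in> E n" using b that r by (auto simp: dist_norm)
    then obtain a c where a: "norm (F a) \<le> real n" "dist a (x0 + z) < e/2"
      and c: "norm (F c) \<le> real n" "dist c x0 < e/2"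
      unfolding E_def closure_approachable using \<open>e > 0\<close> by (metis half_gt_zero mem_Collect_eq)
    have "F (a - c) = F a - F c" using linear_diff[OF lin] by simp
    then have "norm (F (a - c)) \<le> 2 * real n" using a c norm_triangle_ineq4[of "F a" "F c"] by simp
    moreover have "norm (z - (a - c)) < e"
    proof -
      have "z - (a - c) = (x0 + z - a) - (x0 - c)" by (simp add: algebra_simps)
      then have "norm (z - (a - c)) \<le> norm (x0 + z - a) + norm (x0 - c)"
        by (metis norm_triangle_ineq4)
      also have "\<dots> < e" using a c by (simp add: dist_norm norm_minus_commute)
      finally show ?thesis .
    qed
    ultimately show ?thesis by blast
  qed
  define M where "M = 4 * real n / r"
  have Mnn: "M \<ge> 0" unfolding M_def using r by simp
  have approx: "\<exists>x'. norm (x - x') \<le> norm x / 2 \<and> norm (F x') \<le> M * norm x" for x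
  proof (cases "x = 0")
    case True
    then show ?thesis using linear_0[OF lin] by (intro exI[of _ 0]) auto
  next
    case False
    then have nx: "norm x > 0" by simp
    define t where "t = r / (2 * norm x)"
    have t: "t > 0" using r nx unfolding t_def by simp
    have "norm (t *\<^sub>R x) < r" using t r nx unfolding t_def by simp
    then obtain z' where z': "norm (t *\<^sub>R x - z') < r/4" "norm (F z') \<le> 2 * real n"
      using approx0[of "t *\<^sub>R x" "r/4"] r by auto
    define x' where "x' = (1/t) *\<^sub>R z'"
    have "x - x' = (1/t) *\<^sub>R (t *\<^sub>R x - z')" using t unfolding x'_def by (simp add: algebra_simps)
    then have "norm (x - x') = (1/t) * norm (t *\<^sub>R x - z')" using t by simp
    also have "\<dots> \<le> (1/t) * (r/4)" using z' t by (intro mult_left_mono) auto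
    also have "\<dots> = norm x / 2" using r nx unfolding t_def by (simp add: field_simps)
    finally have 1: "norm (x - x') \<le> norm x / 2" .
    have "norm (F x') = (1/t) * norm (F z')" unfolding x'_def scl using t by simp
    also have "\<dots> \<le> (1/t) * (2 * real n)" using z' t by (intro mult_left_mono) auto
    also have "\<dots> = M * norm x" using r nx unfolding t_def M_def by (simp add: field_simps)
    finally show ?thesis using 1 by blast
  qed
  then obtain g where g: "\<And>x. norm (x - g x) \<le> norm x / 2" "\<And>x. norm (F (g x)) \<le> M * norm x"
    by metis
  have bound: "norm (F x) \<le> norm x * (2 * M)" for x
  proof -
    define e where "e k = ((\<lambda>y. y - g y) ^^ k) x" for k
    have e0: "e 0 = x" and eS: "e (Suc k) = e k - g (e k)" for k unfolding e_def by auto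
    have ne: "norm (e k) \<le> norm x / 2 ^ k" for k
    proof (induction k)
      case 0 then show ?case using e0 by simp
    next
      case (Suc k)
      have "norm (e (Suc k)) \<le> norm (e k) / 2" using g(1) eS by simp
      also have "\<dots> \<le> norm x / 2 ^ Suc k" using Suc by (simp add: field_simps)
      finally show ?case .
    qed
    have ps: "(\<Sum>j<k. g (e j)) = x - e k" for k
      by (induction k) (auto simp: e0 eS)
    have Fps: "F (\<Sum>j<k. g (e j)) = (\<Sum>j<k. F (g (e j)))" for k
      by (induction k) (auto simp: linear_0[OF lin] add)
    have nFg: "norm (F (g (e j))) \<le> M * norm x * (1/2) ^ j" for j
    proof -
      have "norm (F (g (e j))) \<le> M * norm (e j)" by (rule g(2))
      also have "\<dots> \<le> M * (norm x / 2 ^ j)" using ne Mnn by (intro mult_left_mono) auto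
      finally show ?thesis by (simp add: power_divide)
    qed
    have sg: "summable (\<lambda>j. M * norm x * (1/2::real) ^ j)"
      by (intro summable_mult summable_geometric) simp
    have sf: "summable (\<lambda>j. F (g (e j)))"
      by (rule summable_comparison_test[OF _ sg]) (use nFg in auto)
    have ek0: "e \<longlonglongrightarrow> 0"
    proof -
      have "(\<lambda>k. norm x / 2 ^ k) \<longlonglongrightarrow> 0"
        by (intro LIMSEQ_divide_realpow_zero) auto
      then show ?thesis
        by (rule Lim_null_comparison[rotated]) (use ne in auto)
    qed
    have "(\<lambda>k. x - e k) \<longlonglongrightarrow> x - 0" by (intro tendsto_intros ek0)
    then have conv: "(\<lambda>k. \<Sum>j<k. g (e j)) \<longlonglongrightarrow> x" using ps by simp
    have "(\<lambda>k. F (\<Sum>j<k. g (e j))) \<longlonglongrightarrow> suminf (\<lambda>j. F (g (e j)))"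
      unfolding Fps using summable_LIMSEQ[OF sf] .
    then have Fx: "F x = suminf (\<lambda>j. F (g (e j)))" by (rule clo[OF conv])
    have pb: "norm (\<Sum>j<k. F (g (e j))) \<le> norm x * (2 * M)" for k
    proof -
      have "norm (\<Sum>j<k. F (g (e j))) \<le> (\<Sum>j<k. norm (F (g (e j))))" by (rule norm_sum)
      also have "\<dots> \<le> (\<Sum>j<k. M * norm x * (1/2) ^ j)" by (intro sum_mono nFg)
      also have "\<dots> \<le> (\<Sum>j. M * norm x * (1/2::real) ^ j)"
        by (intro sum_le_suminf sg) (use Mnn in auto)
      also have "\<dots> = M * norm x * 2" using suminf_geometric[of "1/2::real"] by (simp add: suminf_mult)
      finally show ?thesis by (simp add: algebra_simps)
    qed
    have "norm (suminf (\<lambda>j. F (g (e j)))) \<le> norm x * (2 * M)"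
    proof (rule tendsto_upperbound[of "\<lambda>k. norm (\<Sum>j<k. F (g (e j)))" _ sequentially])
      show "(\<lambda>k. norm (\<Sum>j<k. F (g (e j)))) \<longlonglongrightarrow> norm (suminf (\<lambda>j. F (g (e j))))"
        using summable_LIMSEQ[OF sf] by (rule tendsto_norm)
      show "\<forall>\<^sub>F k in sequentially. norm (\<Sum>j<k. F (g (e j))) \<le> norm x * (2 * M)"
        using pb by simp
    qed simp
    then show ?thesis using Fx by simp
  qed
  show ?thesis by (rule bounded_linear_intro[OF add scl bound])
qed


definition linrel :: "('a::complex_vector \<times> 'a) set \<Rightarrow> bool" where
  "linrel S \<longleftrightarrow> (\<forall>x y u v. (x, y) \<in> S \<longrightarrow> (u, v) \<in> S \<longrightarrow> (x + u, y + v) \<in> S) \<and>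
     (\<forall>a x y. (x, y) \<in> S \<longrightarrow> (a *\<^sub>C x, a *\<^sub>C y) \<in> S)"

lemma linrel_add: "linrel S \<Longrightarrow> (x, y) \<in> S \<Longrightarrow> (u, v) \<in> S \<Longrightarrow> (x + u, y + v) \<in> S"
  unfolding linrel_def by blast
lemma linrel_scale: "linrel S \<Longrightarrow> (x, y) \<in> S \<Longrightarrow> (a *\<^sub>C x, a *\<^sub>C y) \<in> S"
  unfolding linrel_def by blast
lemma linrel_scaleR: "linrel S \<Longrightarrow> (x, y) \<in> S \<Longrightarrow> (r *\<^sub>R x, r *\<^sub>R y) \<in> S"
  using linrel_scale[of S x y "complex_of_real r"] by (simp add: scaleC_of_real)
lemma linrel_minus: "linrel S \<Longrightarrow> (x, y) \<in> S \<Longrightarrow> (- x, - y) \<in> S"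
  using linrel_scale[of S x y "-1"] by (simp add: scaleC_minus1)
lemma linrel_diff: "linrel S \<Longrightarrow> (x, y) \<in> S \<Longrightarrow> (u, v) \<in> S \<Longrightarrow> (x - u, y - v) \<in> S"
  using linrel_add[of S x y "-u" "-v"] linrel_minus[of S u v] by simp

lemma lo_linrel: "linear_operator T \<Longrightarrow> linrel T"
  unfolding linear_operator_def linrel_def by blast
lemma lo_zero: "linear_operator T \<Longrightarrow> (0, 0) \<in> T"
  unfolding linear_operator_def by blast
lemma lo_fun: assumes "linear_operator T" "(x, y) \<in> T" "(x, y') \<in> T" shows "y = y'"
proof -
  have "(x - x, y - y') \<in> T" using linrel_diff[OF lo_linrel[OF assms(1)] assms(2,3)] .
  then have "(0, y - y') \<in> T" by simp
  then have "y - y' = 0" using assms(1) unfolding linear_operator_def by blast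
  then show ?thesis by simp
qed

lemma linrel_comp: "linrel P \<Longrightarrow> linrel Q \<Longrightarrow> linrel (P O Q)"
  unfolding linrel_def relcomp_unfold by blast

definition rinv :: "('a::complex_normed_vector \<times> 'a) set \<Rightarrow> complex \<Rightarrow> 'a \<Rightarrow> 'a" where
  "rinv S l w = (SOME x. \<exists>y. (x, y) \<in> S \<and> y - l *\<^sub>C x = w)"

lemma rinv_props:
  fixes S :: "('a::complex_normed_vector \<times> 'a) set"
  assumes lin: "linrel S" and l: "l \<in> resolvent_set S"
  shows "\<And>w. \<exists>y. (rinv S l w, y) \<in> S \<and> y - l *\<^sub>C rinv S l w = w"
    and "\<And>x y w. (x, y) \<in> S \<Longrightarrow> y - l *\<^sub>C x = w \<Longrightarrow> x = rinv S l w"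
    and "\<And>a w. rinv S l (a *\<^sub>C w) = a *\<^sub>C rinv S l w"
    and "\<And>w w'. rinv S l (w + w') = rinv S l w + rinv S l w'"
    and "bounded_linear (rinv S l)"
proof -
  obtain C where C: "\<And>x y. (x, y) \<in> S \<Longrightarrow> norm x \<le> C * norm (y - l *\<^sub>C x)"
    using l unfolding resolvent_set_def by blast
  show ex: "\<exists>y. (rinv S l w, y) \<in> S \<and> y - l *\<^sub>C rinv S l w = w" for w
  proof -
    have "\<exists>x y. (x, y) \<in> S \<and> y - l *\<^sub>C x = w" using l unfolding resolvent_set_def by blast
    then show ?thesis unfolding rinv_def by (rule someI_ex[where P="\<lambda>x. \<exists>y. (x, y) \<in> S \<and> y - l *\<^sub>C x = w", OF exE]) blast
  qed
  show uq: "x = rinv S l w" if "(x, y) \<in> S" "y - l *\<^sub>C x = w" for x y w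
  proof -
    obtain y' where y': "(rinv S l w, y') \<in> S" "y' - l *\<^sub>C rinv S l w = w" using ex by blast
    have "(x - rinv S l w, y - y') \<in> S" by (rule linrel_diff[OF lin that(1) y'(1)])
    then have "norm (x - rinv S l w) \<le> C * norm ((y - y') - l *\<^sub>C (x - rinv S l w))" by (rule C)
    also have "(y - y') - l *\<^sub>C (x - rinv S l w) = (y - l *\<^sub>C x) - (y' - l *\<^sub>C rinv S l w)"
      by (simp add: scaleC_diff_right algebra_simps)
    also have "\<dots> = 0" using that(2) y'(2) by simp
    finally show ?thesis by simp
  qed
  show sc: "rinv S l (a *\<^sub>C w) = a *\<^sub>C rinv S l w" for a w
  proof -
    obtain y where y: "(rinv S l w, y) \<in> S" "y - l *\<^sub>C rinv S l w = w" using ex by blast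
    have "(a *\<^sub>C rinv S l w, a *\<^sub>C y) \<in> S" by (rule linrel_scale[OF lin y(1)])
    moreover have "a *\<^sub>C y - l *\<^sub>C (a *\<^sub>C rinv S l w) = a *\<^sub>C w"
      using y(2) by (metis mult.commute scaleC_diff_right scaleC_scaleC)
    ultimately show ?thesis using uq by metis
  qed
  show ad: "rinv S l (w + w') = rinv S l w + rinv S l w'" for w w'
  proof -
    obtain y where y: "(rinv S l w, y) \<in> S" "y - l *\<^sub>C rinv S l w = w" using ex by blast
    obtain y' where y': "(rinv S l w', y') \<in> S" "y' - l *\<^sub>C rinv S l w' = w'" using ex by blast
    have "(rinv S l w + rinv S l w', y + y') \<in> S" by (rule linrel_add[OF lin y(1) y'(1)])
    moreover have "(y + y') - l *\<^sub>C (rinv S l w + rinv S l w') = w + w'"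
      using y(2) y'(2) by (simp add: scaleC_add_right algebra_simps)
    ultimately show ?thesis using uq by metis
  qed
  show "bounded_linear (rinv S l)"
  proof (rule bounded_linear_intro[where K="max C 0"])
    show "rinv S l (x + y) = rinv S l x + rinv S l y" for x y by (rule ad)
    show "rinv S l (r *\<^sub>R x) = r *\<^sub>R rinv S l x" for r x using sc[of "complex_of_real r" x]
      by (simp add: scaleC_of_real)
    show "norm (rinv S l x) \<le> norm x * max C 0" for x
    proof -
      obtain y where y: "(rinv S l x, y) \<in> S" "y - l *\<^sub>C rinv S l x = x" using ex by blast
      have "norm (rinv S l x) \<le> C * norm x" using C[OF y(1)] y(2) by simp
      also have "\<dots> \<le> max C 0 * norm x" by (intro mult_right_mono) auto
      also have "\<dots> = norm x * max C 0" by (simp add: mult.commute)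
      finally show ?thesis .
    qed
  qed
qed


lemma scaleC_scaleR_commute: "a *\<^sub>C (r *\<^sub>R (v::'a::complex_vector)) = r *\<^sub>R (a *\<^sub>C v)"
  by (simp add: scaleR_scaleC scaleC_scaleC mult.commute)

lemma scaleC_add_same: "a *\<^sub>C v + b *\<^sub>C v = (a + b) *\<^sub>C (v::'a::complex_vector)"
  by (simp add: scaleC_add_left)

lemma res_comp:
  fixes P Q :: "('a::{complex_normed_vector,banach} \<times> 'a) set"
  assumes lP: "linear_operator P" and lQ: "linear_operator Q" and cP: "closed P"
    and l: "l \<in> resolvent_set (P O Q)"
  obtains R F where "bounded_linear R" "bounded_linear F"
    "\<And>w. (R w, F w) \<in> P" "\<And>w. (F w, w + l *\<^sub>C R w) \<in> Q"
    "\<And>x y z. (x, y) \<in> P \<Longrightarrow> (y, z) \<in> Q \<Longrightarrow> x = R (z - l *\<^sub>C x)"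
    "\<And>a w. R (a *\<^sub>C w) = a *\<^sub>C R w" "\<And>w w'. R (w + w') = R w + R w'"
proof -
  have lin: "linrel (P O Q)" by (intro linrel_comp lo_linrel lP lQ)
  define R where "R = rinv (P O Q) l"
  note rp = rinv_props[OF lin l, folded R_def]
  have ex: "\<exists>u. (R w, u) \<in> P \<and> (u, w + l *\<^sub>C R w) \<in> Q" for w
  proof -
    obtain y where y: "(R w, y) \<in> P O Q" "y - l *\<^sub>C R w = w" using rp(1) by blast
    then have "y = w + l *\<^sub>C R w" by (simp add: diff_eq_eq)
    then show ?thesis using y(1) by blast
  qed
  define F where "F w = (SOME u. (R w, u) \<in> P \<and> (u, w + l *\<^sub>C R w) \<in> Q)" for w
  have FP: "(R w, F w) \<in> P" and FQ: "(F w, w + l *\<^sub>C R w) \<in> Q" for w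
    using someI_ex[OF ex[of w]] unfolding F_def by blast+
  have uq: "x = R (z - l *\<^sub>C x)" if "(x, y) \<in> P" "(y, z) \<in> Q" for x y z
    using rp(2)[of x z "z - l *\<^sub>C x"] that by blast
  have Fadd: "F (w + w') = F w + F w'" for w w'
  proof -
    have "(R w + R w', F w + F w') \<in> P" by (rule linrel_add[OF lo_linrel[OF lP] FP FP])
    then have "(R (w + w'), F w + F w') \<in> P" using rp(4) by simp
    then show ?thesis using lo_fun[OF lP FP] by metis
  qed
  have FscR: "F (r *\<^sub>R w) = r *\<^sub>R F w" for r w
  proof -
    have "(r *\<^sub>R R w, r *\<^sub>R F w) \<in> P" by (rule linrel_scaleR[OF lo_linrel[OF lP] FP])
    moreover have "R (r *\<^sub>R w) = r *\<^sub>R R w" using rp(3)[of "complex_of_real r" w] by (simp add: scaleC_of_real)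
    ultimately show ?thesis using lo_fun[OF lP FP] by metis
  qed
  have Fcl: "F x = v" if w: "w \<longlonglongrightarrow> x" and Fw: "(\<lambda>k. F (w k)) \<longlonglongrightarrow> v" for w x v
  proof -
    have "(\<lambda>k. R (w k)) \<longlonglongrightarrow> R x" using bounded_linear.tendsto[OF rp(5) w] .
    then have lim: "(\<lambda>k. (R (w k), F (w k))) \<longlonglongrightarrow> (R x, v)" using Fw by (rule tendsto_Pair)
    have "(R x, v) \<in> P" by (rule closed_sequentially[OF cP _ lim]) (rule FP)
    then show ?thesis using lo_fun[OF lP FP] by metis
  qed
  have bF: "bounded_linear F" by (rule closed_graph_bounded[OF Fadd FscR Fcl])
  show ?thesis
  proof (rule that)
    show "bounded_linear R" by (rule rp(5))
    show "bounded_linear F" by (rule bF)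
    show "(R w, F w) \<in> P" for w by (rule FP)
    show "(F w, w + l *\<^sub>C R w) \<in> Q" for w by (rule FQ)
    show "x = R (z - l *\<^sub>C x)" if "(x, y) \<in> P" "(y, z) \<in> Q" for x y z using uq that by blast
    show "R (a *\<^sub>C w) = a *\<^sub>C R w" for a w by (rule rp(3))
    show "R (w + w') = R w + R w'" for w w' by (rule rp(4))
  qed
qed

lemma res_comp_ex:
  fixes P Q :: "('a::{complex_normed_vector,banach} \<times> 'a) set"
  assumes lP: "linear_operator P" and lQ: "linear_operator Q" and cP: "closed P"
    and l: "l \<in> resolvent_set (P O Q)"
  shows "\<exists>R F. bounded_linear R \<and> bounded_linear F \<and> (\<forall>w. (R w, F w) \<in> P) \<and>
    (\<forall>w. (F w, w + l *\<^sub>C R w) \<in> Q) \<and>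
    (\<forall>x y z. (x, y) \<in> P \<longrightarrow> (y, z) \<in> Q \<longrightarrow> x = R (z - l *\<^sub>C x)) \<and>
    (\<forall>a w. R (a *\<^sub>C w) = a *\<^sub>C R w) \<and> (\<forall>w w'. R (w + w') = R w + R w')"
proof (rule res_comp[OF assms])
  fix R F assume "bounded_linear R" "bounded_linear F"
    "\<And>w. (R w, F w) \<in> P" "\<And>w. (F w, w + l *\<^sub>C R w) \<in> Q"
    "\<And>x y z. (x, y) \<in> P \<Longrightarrow> (y, z) \<in> Q \<Longrightarrow> x = R (z - l *\<^sub>C x)"
    "\<And>a w. R (a *\<^sub>C w) = a *\<^sub>C R w" "\<And>w w'. R (w + w') = R w + R w'"
  then show ?thesis by blast
qed

lemma collect3: "a *\<^sub>C v + d + b *\<^sub>C v - c *\<^sub>C v = (a + b - c) *\<^sub>C v + (d::'a::complex_vector)"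
  by (simp add: scaleC_add_left scaleC_diff_left algebra_simps)

lemma vid1:
  fixes x v d :: "'a::complex_vector"
  assumes "x = (l - m) *\<^sub>C v + d"
  shows "(l - m) *\<^sub>C (x + m *\<^sub>C v) - l *\<^sub>C ((l - m) *\<^sub>C v) = (l - m) *\<^sub>C d"
proof -
  have "(l - m) *\<^sub>C (x + m *\<^sub>C v) - l *\<^sub>C ((l - m) *\<^sub>C v)
      = ((l - m) * (l - m)) *\<^sub>C v + (l - m) *\<^sub>C d + ((l - m) * m) *\<^sub>C v - (l * (l - m)) *\<^sub>C v"
    unfolding assms by (simp add: scaleC_add_right scaleC_diff_right scaleC_scaleC)
  also have "\<dots> = (((l - m) * (l - m)) + ((l - m) * m) - (l * (l - m))) *\<^sub>C v + (l - m) *\<^sub>C d"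
    by (rule collect3)
  also have "((l - m) * (l - m)) + ((l - m) * m) - (l * (l - m)) = 0" by (simp add: algebra_simps)
  finally show ?thesis by simp
qed


lemma vid0: "z - m *\<^sub>C x = (l - m) *\<^sub>C x + (z - l *\<^sub>C (x::'a::complex_vector))"
  by (simp add: scaleC_diff_left algebra_simps)

lemma shift_tendsto: "g \<longlonglongrightarrow> L \<Longrightarrow> (\<lambda>n. g (max n N)) \<longlonglongrightarrow> L"
  by (rule Lim_transform_eventually) (auto intro: eventually_sequentiallyI[of N])

lemma ip_lim0:
  fixes ip :: "'a::complex_normed_vector \<Rightarrow> 'a \<Rightarrow> complex"
  assumes K: "ipbound ip K" and a: "\<And>n. norm (a n) \<le> B" and b: "b \<longlonglongrightarrow> 0"
  shows "(\<lambda>n. ip (a n) (b n)) \<longlonglongrightarrow> 0" "(\<lambda>n. ip (b n) (a n)) \<longlonglongrightarrow> 0"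
proof -
  have K0: "K > 0" and Kb: "\<And>x y. cmod (ip x y) \<le> K * norm x * norm y" using K unfolding ipbound_def by auto
  have g: "(\<lambda>n. (K * B) * norm (b n)) \<longlonglongrightarrow> 0"
    by (intro tendsto_mult_right_zero tendsto_norm_zero b)
  have "cmod (ip (a n) (b n)) \<le> (K * B) * norm (b n)" for n
  proof -
    have "cmod (ip (a n) (b n)) \<le> K * norm (a n) * norm (b n)" by (rule Kb)
    also have "\<dots> \<le> K * B * norm (b n)" using K0 a by (intro mult_right_mono mult_left_mono) auto
    finally show ?thesis .
  qed
  then show "(\<lambda>n. ip (a n) (b n)) \<longlonglongrightarrow> 0" by (intro Lim_null_comparison[OF _ g]) auto
  have "cmod (ip (b n) (a n)) \<le> (K * B) * norm (b n)" for n
  proof -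
    have "cmod (ip (b n) (a n)) \<le> K * norm (b n) * norm (a n)" by (rule Kb)
    also have "\<dots> \<le> K * norm (b n) * B" using K0 a by (intro mult_left_mono) auto
    finally show ?thesis by (simp add: mult_ac)
  qed
  then show "(\<lambda>n. ip (b n) (a n)) \<longlonglongrightarrow> 0" by (intro Lim_null_comparison[OF _ g]) auto
qed

lemma bl_tendsto0: "bounded_linear f \<Longrightarrow> r \<longlonglongrightarrow> 0 \<Longrightarrow> (\<lambda>n. f (r n)) \<longlonglongrightarrow> 0"
  by (rule bounded_linear.tendsto_zero)

lemma bl_scaleC:
  fixes F :: "'a::real_normed_vector \<Rightarrow> 'b::complex_normed_vector"
  assumes "bounded_linear F"
  shows "bounded_linear (\<lambda>v. c *\<^sub>C F v)"
proof -
  interpret bounded_linear F by fact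
  obtain KF where KF: "\<And>x. norm (F x) \<le> norm x * KF" using bounded by blast
  show ?thesis
  proof (rule bounded_linear_intro[where K="cmod c * KF"])
    show "c *\<^sub>C F (x + y) = c *\<^sub>C F x + c *\<^sub>C F y" for x y by (simp add: add scaleC_add_right)
    show "c *\<^sub>C F (r *\<^sub>R x) = r *\<^sub>R (c *\<^sub>C F x)" for r x by (simp add: scale scaleC_scaleR_commute)
    show "norm (c *\<^sub>C F x) \<le> norm x * (cmod c * KF)" for x
    proof -
      have "norm (c *\<^sub>C F x) = cmod c * norm (F x)" by (rule norm_scaleC)
      also have "\<dots> \<le> cmod c * (norm x * KF)" using KF[of x] by (intro mult_left_mono) auto
      finally show ?thesis by (simp add: mult_ac)
    qed
  qed
qed


locale pq =
  fixes ip :: "'a::{complex_normed_vector,banach} \<Rightarrow> 'a \<Rightarrow> complex"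
    and P Q :: "('a \<times> 'a) set" and K :: real
  assumes sq: "sesquilinear ip" and ipb: "ipbound ip K"
    and lP: "linear_operator P" and lQ: "linear_operator Q"
    and cP: "closed P" and cQ: "closed Q"
    and adj: "\<And>x u y v. (x, u) \<in> P \<Longrightarrow> (y, v) \<in> Q \<Longrightarrow> ip u y = ip x v"
    and rA: "resolvent_set (P O Q) \<noteq> {}" and rB: "resolvent_set (Q O P) \<noteq> {}"
begin

lemma transfer:
  assumes lam: "l \<noteq> 0"
    and xP: "\<And>n. (x n, u n) \<in> P" and xQ: "\<And>n. (u n, z n) \<in> Q" and xn: "\<And>n. norm (x n) = 1"
    and conv: "(\<lambda>n. z n - l *\<^sub>C x n) \<longlonglongrightarrow> 0"
  shows "\<exists>y v w s c M. (\<forall>n. (y n, v n) \<in> Q \<and> (v n, w n) \<in> P \<and> norm (y n) = 1) \<and>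
     (\<lambda>n. w n - l *\<^sub>C y n) \<longlonglongrightarrow> 0 \<and> c > 0 \<and> (\<forall>n. c \<le> s n \<and> s n \<le> M) \<and>
     (\<lambda>n. complex_of_real ((s n)\<^sup>2) * ip (y n) (y n) - cnj l * ip (x n) (x n)) \<longlonglongrightarrow> 0 \<and>
     (weakly_to_zero x \<longrightarrow> weakly_to_zero y)"
proof -
  obtain \<mu> where mu: "\<mu> \<in> resolvent_set (P O Q)" using rA by blast
  obtain R F where H: "bounded_linear R \<and> bounded_linear F \<and> (\<forall>w. (R w, F w) \<in> P) \<and>
    (\<forall>w. (F w, w + \<mu> *\<^sub>C R w) \<in> Q) \<and>
    (\<forall>x y z. (x, y) \<in> P \<longrightarrow> (y, z) \<in> Q \<longrightarrow> x = R (z - \<mu> *\<^sub>C x)) \<and>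
    (\<forall>a w. R (a *\<^sub>C w) = a *\<^sub>C R w) \<and> (\<forall>w w'. R (w + w') = R w + R w')"
    using res_comp_ex[OF lP lQ cP mu] by blast
  have bR: "bounded_linear R" and bF: "bounded_linear F"
    and RF: "\<And>w. (R w, F w) \<in> P" and FQ: "\<And>w. (F w, w + \<mu> *\<^sub>C R w) \<in> Q"
    and Ruq: "\<And>x y z. (x, y) \<in> P \<Longrightarrow> (y, z) \<in> Q \<Longrightarrow> x = R (z - \<mu> *\<^sub>C x)"
    and Rsc: "\<And>a w. R (a *\<^sub>C w) = a *\<^sub>C R w" and Radd: "\<And>w w'. R (w + w') = R w + R w'"
    using H by auto
  obtain \<nu> where nu: "\<nu> \<in> resolvent_set (Q O P)" using rB by blast
  obtain S G where H2: "bounded_linear S \<and> bounded_linear G \<and> (\<forall>w. (S w, G w) \<in> Q) \<and>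
    (\<forall>w. (G w, w + \<nu> *\<^sub>C S w) \<in> P) \<and>
    (\<forall>x y z. (x, y) \<in> Q \<longrightarrow> (y, z) \<in> P \<longrightarrow> x = S (z - \<nu> *\<^sub>C x)) \<and>
    (\<forall>a w. S (a *\<^sub>C w) = a *\<^sub>C S w) \<and> (\<forall>w w'. S (w + w') = S w + S w')"
    using res_comp_ex[OF lQ lP cQ nu] by blast
  have bS: "bounded_linear S" and bG: "bounded_linear G"
    and SG: "\<And>w. (S w, G w) \<in> Q" and GP: "\<And>w. (G w, w + \<nu> *\<^sub>C S w) \<in> P"
    and Suq: "\<And>x y z. (x, y) \<in> Q \<Longrightarrow> (y, z) \<in> P \<Longrightarrow> x = S (z - \<nu> *\<^sub>C x)"
    using H2 by auto
  have linP: "linrel P" and linQ: "linrel Q" using lP lQ by (auto intro: lo_linrel)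
  define r where "r n = z n - l *\<^sub>C x n" for n
  have r0: "r \<longlonglongrightarrow> 0" using conv unfolding r_def .
  define c where "c = l - \<mu>"
  have xdec: "x n = c *\<^sub>C R (x n) + R (r n)" for n
  proof -
    have "x n = R (z n - \<mu> *\<^sub>C x n)" by (rule Ruq[OF xP xQ])
    also have "z n - \<mu> *\<^sub>C x n = c *\<^sub>C x n + r n" unfolding c_def r_def by (rule vid0)
    finally show ?thesis by (simp add: Radd Rsc)
  qed
  have udec: "u n = c *\<^sub>C F (x n) + F (r n)" for n
  proof -
    have "(c *\<^sub>C R (x n), c *\<^sub>C F (x n)) \<in> P" by (rule linrel_scale[OF linP RF])
    then have "(c *\<^sub>C R (x n) + R (r n), c *\<^sub>C F (x n) + F (r n)) \<in> P" by (rule linrel_add[OF linP _ RF])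
    then have "(x n, c *\<^sub>C F (x n) + F (r n)) \<in> P" using xdec[of n] by simp
    then show ?thesis by (rule lo_fun[OF lP xP])
  qed
  define x2 where "x2 n = c *\<^sub>C R (x n)" for n
  define y2 where "y2 n = c *\<^sub>C F (x n)" for n
  define a2 where "a2 n = c *\<^sub>C (x n + \<mu> *\<^sub>C R (x n))" for n
  define w2 where "w2 n = c *\<^sub>C (u n + \<mu> *\<^sub>C F (x n))" for n
  have m1: "(x2 n, y2 n) \<in> P" for n unfolding x2_def y2_def by (rule linrel_scale[OF linP RF])
  have m2: "(y2 n, a2 n) \<in> Q" for n unfolding y2_def a2_def by (rule linrel_scale[OF linQ FQ])
  have m3: "(a2 n, w2 n) \<in> P" for n unfolding a2_def w2_def
    by (intro linrel_scale[OF linP] linrel_add[OF linP xP] linrel_scale[OF linP RF])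
  have e_eq: "a2 n - l *\<^sub>C x2 n = c *\<^sub>C R (r n)" for n
    unfolding a2_def x2_def c_def by (rule vid1) (use xdec[of n] in \<open>simp add: c_def\<close>)
  have f_eq: "w2 n - l *\<^sub>C y2 n = c *\<^sub>C F (r n)" for n
    unfolding w2_def y2_def c_def by (rule vid1) (use udec[of n] in \<open>simp add: c_def\<close>)
  have x2_eq: "x2 n = x n - R (r n)" for n using xdec[of n] unfolding x2_def by (simp add: algebra_simps)
  have Rr0: "(\<lambda>n. R (r n)) \<longlonglongrightarrow> 0" by (rule bl_tendsto0[OF bR r0])
  have e0: "(\<lambda>n. a2 n - l *\<^sub>C x2 n) \<longlonglongrightarrow> 0"
    unfolding e_eq by (rule bl_tendsto0[OF bl_scaleC[OF bR] r0])
  have f0: "(\<lambda>n. w2 n - l *\<^sub>C y2 n) \<longlonglongrightarrow> 0"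
    unfolding f_eq by (rule bl_tendsto0[OF bl_scaleC[OF bF] r0])
  obtain KF where KF: "KF > 0" "\<And>v. norm (F v) \<le> norm v * KF" using bounded_linear.pos_bounded[OF bF] by blast
  obtain KR where KR: "KR > 0" "\<And>v. norm (R v) \<le> norm v * KR" using bounded_linear.pos_bounded[OF bR] by blast
  obtain KG where KG: "KG > 0" "\<And>v. norm (G v) \<le> norm v * KG" using bounded_linear.pos_bounded[OF bG] by blast
  define M where "M = cmod c * KF"
  have y2M: "norm (y2 n) \<le> M" for n
  proof -
    have "norm (y2 n) = cmod c * norm (F (x n))" unfolding y2_def by (rule norm_scaleC)
    also have "\<dots> \<le> cmod c * (norm (x n) * KF)" using KF by (intro mult_left_mono) auto
    finally show ?thesis unfolding M_def using xn by simp
  qed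
  have x2B: "norm (x2 n) \<le> cmod c * KR" for n
  proof -
    have "norm (x2 n) = cmod c * norm (R (x n))" unfolding x2_def by (rule norm_scaleC)
    also have "\<dots> \<le> cmod c * (norm (x n) * KR)" using KR by (intro mult_left_mono) auto
    finally show ?thesis using xn by simp
  qed
  define L where "L = cmod l"
  have L0: "L > 0" unfolding L_def using lam by simp
  have ev1: "eventually (\<lambda>n. norm (R (r n)) < 1/4) sequentially"
    using tendstoD[OF Rr0, of "1/4"] by (simp add: dist_norm)
  have ev2: "eventually (\<lambda>n. norm (a2 n - l *\<^sub>C x2 n) < L/4) sequentially"
    using tendstoD[OF e0, of "L/4"] L0 by (simp add: dist_norm)
  have ev3: "eventually (\<lambda>n. norm (w2 n - l *\<^sub>C y2 n) < L/(4*KG)) sequentially"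
    using tendstoD[OF f0, of "L/(4*KG)"] L0 KG by (simp add: dist_norm)
  define c0 where "c0 = L / (4 * KG * (cmod (l - \<nu>) + 1))"
  have c0: "c0 > 0" unfolding c0_def using L0 KG(1) by (intro divide_pos_pos mult_pos_pos add_nonneg_pos) auto
  have lower: "c0 \<le> norm (y2 n)"
    if h1: "norm (R (r n)) < 1/4" and h2: "norm (a2 n - l *\<^sub>C x2 n) < L/4"
      and h3: "norm (w2 n - l *\<^sub>C y2 n) < L/(4*KG)" for n
  proof -
    have ya: "y2 n = S (w2 n - \<nu> *\<^sub>C y2 n)" by (rule Suq[OF m2 m3])
    have aG: "a2 n = G (w2 n - \<nu> *\<^sub>C y2 n)"
      using lo_fun[OF lQ m2[of n] SG[of "w2 n - \<nu> *\<^sub>C y2 n", folded ya]] .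
    have "norm (w2 n - \<nu> *\<^sub>C y2 n) \<le> norm (w2 n - l *\<^sub>C y2 n) + norm ((l - \<nu>) *\<^sub>C y2 n)"
    proof -
      have "w2 n - \<nu> *\<^sub>C y2 n = (w2 n - l *\<^sub>C y2 n) + (l - \<nu>) *\<^sub>C y2 n"
        by (simp add: scaleC_diff_left)
      then show ?thesis by (simp only:) (rule norm_triangle_ineq)
    qed
    also have "norm ((l - \<nu>) *\<^sub>C y2 n) = cmod (l - \<nu>) * norm (y2 n)" by (rule norm_scaleC)
    finally have B1: "norm (w2 n - \<nu> *\<^sub>C y2 n) \<le> norm (w2 n - l *\<^sub>C y2 n) + cmod (l - \<nu>) * norm (y2 n)" .
    have "norm (a2 n) \<le> norm (w2 n - \<nu> *\<^sub>C y2 n) * KG" using KG(2) aG by simp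
    also have "\<dots> \<le> (norm (w2 n - l *\<^sub>C y2 n) + cmod (l - \<nu>) * norm (y2 n)) * KG"
      using B1 KG(1) by (intro mult_right_mono) auto
    also have "\<dots> \<le> (L/(4*KG) + cmod (l - \<nu>) * norm (y2 n)) * KG"
      using h3 KG(1) by (intro mult_right_mono) auto
    also have "\<dots> = L/4 + KG * cmod (l - \<nu>) * norm (y2 n)" using KG(1) by (simp add: field_simps)
    finally have A1: "norm (a2 n) \<le> L/4 + KG * cmod (l - \<nu>) * norm (y2 n)" .
    have "norm (x2 n) \<ge> 3/4"
    proof -
      have "norm (x n) \<le> norm (x2 n) + norm (R (r n))" using norm_triangle_ineq[of "x2 n" "R (r n)"] x2_eq[of n] by simp
      then show ?thesis using xn[of n] h1 by simp
    qed
    then have "L * (3/4) \<le> norm (l *\<^sub>C x2 n)" unfolding L_def norm_scaleC using L0 L_def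
      by (intro mult_left_mono) auto
    moreover have "norm (l *\<^sub>C x2 n) \<le> norm (a2 n) + norm (a2 n - l *\<^sub>C x2 n)"
      using norm_triangle_ineq4[of "a2 n" "a2 n - l *\<^sub>C x2 n"] by simp
    ultimately have A2: "L/2 \<le> norm (a2 n)" using h2 by simp
    have "L/2 \<le> L/4 + KG * cmod (l - \<nu>) * norm (y2 n)" using A1 A2 by linarith
    then have "L/4 \<le> KG * cmod (l - \<nu>) * norm (y2 n)" by simp
    also have "\<dots> \<le> KG * (cmod (l - \<nu>) + 1) * norm (y2 n)" using KG(1)
      by (intro mult_right_mono mult_left_mono) auto
    finally have "L/4 \<le> KG * (cmod (l - \<nu>) + 1) * norm (y2 n)" .
    moreover have D: "4 * KG * (cmod (l - \<nu>) + 1) > 0" using KG(1) by (intro mult_pos_pos add_nonneg_pos) auto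
    ultimately have "L \<le> norm (y2 n) * (4 * KG * (cmod (l - \<nu>) + 1))" by (simp add: mult_ac)
    then show ?thesis unfolding c0_def using D by (simp add: pos_divide_le_eq)
  qed
  obtain N where N: "\<And>n. n \<ge> N \<Longrightarrow> c0 \<le> norm (y2 n)"
    using eventually_conj[OF ev1 eventually_conj[OF ev2 ev3]] lower
    unfolding eventually_sequentially by blast
  define m where "m n = max n N" for n
  have mN: "n \<ge> N \<Longrightarrow> m n = n" for n unfolding m_def by simp
  define s where "s n = norm (y2 (m n))" for n
  have sb: "c0 \<le> s n \<and> s n \<le> M" for n unfolding s_def m_def using N[of "max n N"] y2M by simp
  have spos: "s n > 0" for n using sb[of n] c0 by simp
  define y where "y n = (1 / s n) *\<^sub>R y2 (m n)" for n
  define v where "v n = (1 / s n) *\<^sub>R a2 (m n)" for n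
  define w where "w n = (1 / s n) *\<^sub>R w2 (m n)" for n
  have mem: "(y n, v n) \<in> Q \<and> (v n, w n) \<in> P \<and> norm (y n) = 1" for n
  proof (intro conjI)
    show "(y n, v n) \<in> Q" unfolding y_def v_def by (rule linrel_scaleR[OF linQ m2])
    show "(v n, w n) \<in> P" unfolding v_def w_def by (rule linrel_scaleR[OF linP m3])
    show "norm (y n) = 1" unfolding y_def using spos[of n] by (simp add: s_def)
  qed
  have wy: "w n - l *\<^sub>C y n = (1 / s n) *\<^sub>R (w2 (m n) - l *\<^sub>C y2 (m n))" for n
    unfolding w_def y_def by (simp add: scaleC_scaleR_commute scaleR_diff_right)
  have conv_out: "(\<lambda>n. w n - l *\<^sub>C y n) \<longlonglongrightarrow> 0"
  proof (rule Lim_null_comparison)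
    show "(\<lambda>n. (1 / c0) * norm (w2 (m n) - l *\<^sub>C y2 (m n))) \<longlonglongrightarrow> 0"
      unfolding m_def by (intro tendsto_mult_right_zero tendsto_norm_zero shift_tendsto f0)
    have "norm (w n - l *\<^sub>C y n) \<le> (1 / c0) * norm (w2 (m n) - l *\<^sub>C y2 (m n))" for n
    proof -
      have "norm (w n - l *\<^sub>C y n) = (1 / s n) * norm (w2 (m n) - l *\<^sub>C y2 (m n))"
        unfolding wy using spos[of n] by simp
      also have "\<dots> \<le> (1 / c0) * norm (w2 (m n) - l *\<^sub>C y2 (m n))"
        using sb[of n] c0 by (intro mult_right_mono) (auto simp: frac_le)
      finally show ?thesis .
    qed
    then show "\<forall>\<^sub>F n in sequentially. norm (w n - l *\<^sub>C y n) \<le> (1 / c0) * norm (w2 (m n) - l *\<^sub>C y2 (m n))"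
      by simp
  qed
  define d where "d n = R (r n)" for n
  define e where "e n = a2 n - l *\<^sub>C x2 n" for n
  define B where "B = 1 + cmod c * KR"
  have dB: "norm (d n) \<le> B" for n
  proof -
    have "d n = x n - x2 n" unfolding d_def using x2_eq[of n] by simp
    then have "norm (d n) \<le> norm (x n) + norm (x2 n)" by (simp add: norm_triangle_ineq4)
    then show ?thesis unfolding B_def using xn[of n] x2B[of n] by simp
  qed
  have x2B': "norm (x2 n) \<le> B" for n using x2B[of n] unfolding B_def by simp
  have xB: "norm (x n) \<le> 1" for n using xn[of n] by simp
  have d0: "d \<longlonglongrightarrow> 0" unfolding d_def by (rule Rr0)
  have e0': "e \<longlonglongrightarrow> 0" unfolding e_def by (rule e0)
  define E where "E n = ip (y2 n) (y2 n) - cnj l * ip (x n) (x n)" for n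
  have Eeq: "E n = cnj l * (- ip (x n) (d n) - ip (d n) (x n) + ip (d n) (d n)) + ip (x2 n) (e n)" for n
  proof -
    have "ip (y2 n) (y2 n) = ip (x2 n) (a2 n)" by (rule adj[OF m1 m2])
    also have "a2 n = l *\<^sub>C x2 n + e n" unfolding e_def by simp
    also have "ip (x2 n) (l *\<^sub>C x2 n + e n) = cnj l * ip (x2 n) (x2 n) + ip (x2 n) (e n)"
      by (simp add: sq_add_right[OF sq] sq_scale_right[OF sq])
    also have "x2 n = x n - d n" unfolding d_def by (rule x2_eq)
    also have "ip (x n - d n) (x n - d n) = ip (x n) (x n) - ip (x n) (d n) - ip (d n) (x n) + ip (d n) (d n)"
      by (simp add: sq_diff_left[OF sq] sq_diff_right[OF sq])
    finally have "ip (y2 n) (y2 n) = cnj l * (ip (x n) (x n) - ip (x n) (d n) - ip (d n) (x n) + ip (d n) (d n))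
      + ip (x n - d n) (e n)" .
    moreover have "x n - d n = x2 n" unfolding d_def using x2_eq[of n] by simp
    ultimately show ?thesis unfolding E_def by (simp add: algebra_simps)
  qed
  have E0: "E \<longlonglongrightarrow> 0"
  proof -
    have "(\<lambda>n. cnj l * (- ip (x n) (d n) - ip (d n) (x n) + ip (d n) (d n)) + ip (x2 n) (e n))
        \<longlonglongrightarrow> cnj l * (- 0 - 0 + 0) + 0"
      by (intro tendsto_intros ip_lim0[OF ipb xB d0] ip_lim0[OF ipb dB d0] ip_lim0[OF ipb x2B' e0'])
    then show ?thesis unfolding Eeq[abs_def] by simp
  qed
  have ipy: "complex_of_real ((s n)\<^sup>2) * ip (y n) (y n) = ip (y2 (m n)) (y2 (m n))" for n
  proof -
    have "ip (y n) (y n) = complex_of_real (1 / s n) * complex_of_real (1 / s n) * ip (y2 (m n)) (y2 (m n))"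
      unfolding y_def scaleR_scaleC by (simp add: sq_scale_left[OF sq] sq_scale_right[OF sq])
    then show ?thesis using spos[of n] by (simp add: power2_eq_square field_simps)
  qed
  have rel: "(\<lambda>n. complex_of_real ((s n)\<^sup>2) * ip (y n) (y n) - cnj l * ip (x n) (x n)) \<longlonglongrightarrow> 0"
  proof (rule Lim_transform_eventually[OF E0])
    show "\<forall>\<^sub>F n in sequentially. E n = complex_of_real ((s n)\<^sup>2) * ip (y n) (y n) - cnj l * ip (x n) (x n)"
      unfolding ipy E_def by (intro eventually_sequentiallyI[of N]) (simp add: mN)
  qed
  have weak: "weakly_to_zero y" if wx: "weakly_to_zero x"
    unfolding weakly_to_zero_def
  proof (intro allI impI)
    fix f :: "'a \<Rightarrow> real" assume bf: "bounded_linear f"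
    have "bounded_linear (\<lambda>v. f (c *\<^sub>C F v))"
      using bounded_linear_compose[OF bf bl_scaleC[OF bF]] by (simp add: o_def)
    then have "(\<lambda>n. f (c *\<^sub>C F (x n))) \<longlonglongrightarrow> 0" using wx unfolding weakly_to_zero_def by blast
    then have fy2: "(\<lambda>n. f (y2 n)) \<longlonglongrightarrow> 0" unfolding y2_def .
    show "(\<lambda>n. f (y n)) \<longlonglongrightarrow> 0"
    proof (rule Lim_null_comparison)
      show "(\<lambda>n. (1 / c0) * norm (f (y2 (m n)))) \<longlonglongrightarrow> 0"
        unfolding m_def by (intro tendsto_mult_right_zero tendsto_norm_zero shift_tendsto fy2)
      have "norm (f (y n)) \<le> (1 / c0) * norm (f (y2 (m n)))" for n
      proof -
        have "f (y n) = (1 / s n) * f (y2 (m n))" unfolding y_def using linear_scale[OF bounded_linear.linear[OF bf]] by simp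
        then have "norm (f (y n)) = (1 / s n) * norm (f (y2 (m n)))" using spos[of n] by simp
        also have "\<dots> \<le> (1 / c0) * norm (f (y2 (m n)))"
          using sb[of n] c0 by (intro mult_right_mono) (auto simp: frac_le)
        finally show ?thesis .
      qed
      then show "\<forall>\<^sub>F n in sequentially. norm (f (y n)) \<le> (1 / c0) * norm (f (y2 (m n)))" by simp
    qed
  qed
  show ?thesis
    using mem conv_out c0 sb rel weak by blast
qed

end

definition Lpos :: "(nat \<Rightarrow> real) \<Rightarrow> bool" where
  "Lpos a \<longleftrightarrow> liminf (\<lambda>n. ereal (a n)) > 0"
definition Lneg :: "(nat \<Rightarrow> real) \<Rightarrow> bool" where
  "Lneg a \<longleftrightarrow> limsup (\<lambda>n. ereal (a n)) < 0"
definition relinv :: "real \<Rightarrow> ((nat \<Rightarrow> real) \<Rightarrow> bool) \<Rightarrow> ((nat \<Rightarrow> real) \<Rightarrow> bool) \<Rightarrow> bool" where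
  "relinv r PA PB \<longleftrightarrow> (\<forall>a b s c M. c > 0 \<longrightarrow> (\<forall>n. c \<le> s n \<and> s n \<le> M) \<longrightarrow>
     (\<lambda>n. (s n)\<^sup>2 * b n - r * a n) \<longlonglongrightarrow> 0 \<longrightarrow> PB b \<longrightarrow> PA a)"

lemma Lpos_ev: "Lpos b \<Longrightarrow> \<exists>z>0. eventually (\<lambda>n. b n > z) sequentially"
proof -
  assume "Lpos b"
  then obtain z where z: "0 < ereal z" "ereal z < liminf (\<lambda>n. ereal (b n))"
    unfolding Lpos_def using ereal_dense2 by blast
  then have "eventually (\<lambda>n. ereal z < ereal (b n)) sequentially" by (intro less_LiminfD)
  then show ?thesis using z(1) by auto
qed

lemma Lneg_ev: "Lneg b \<Longrightarrow> \<exists>z<0. eventually (\<lambda>n. b n < z) sequentially"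
proof -
  assume "Lneg b"
  then obtain z where z: "limsup (\<lambda>n. ereal (b n)) < ereal z" "ereal z < 0"
    unfolding Lneg_def using ereal_dense2 by blast
  then have "eventually (\<lambda>n. ereal (b n) < ereal z) sequentially" by (intro Limsup_lessD)
  then show ?thesis using z(2) by auto
qed

lemma Lpos_of: "z > 0 \<Longrightarrow> eventually (\<lambda>n. a n \<ge> z) sequentially \<Longrightarrow> Lpos a"
proof -
  assume z: "z > 0" and ev: "eventually (\<lambda>n. a n \<ge> z) sequentially"
  have "ereal z \<le> liminf (\<lambda>n. ereal (a n))"
    by (rule Liminf_bounded) (use ev in \<open>auto elim: eventually_mono\<close>)
  moreover have "0 < ereal z" using z by simp
  ultimately show ?thesis unfolding Lpos_def by (rule order_less_le_trans[rotated])
qed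

lemma Lneg_of: "z < 0 \<Longrightarrow> eventually (\<lambda>n. a n \<le> z) sequentially \<Longrightarrow> Lneg a"
proof -
  assume z: "z < 0" and ev: "eventually (\<lambda>n. a n \<le> z) sequentially"
  have "limsup (\<lambda>n. ereal (a n)) \<le> ereal z"
    by (rule Limsup_bounded) (use ev in \<open>auto elim: eventually_mono\<close>)
  moreover have "ereal z < 0" using z by simp
  ultimately show ?thesis unfolding Lneg_def by (rule order_le_less_trans)
qed

lemma rel_ev:
  fixes s b t :: "nat \<Rightarrow> real"
  assumes c: "c > 0" and s: "\<And>n. c \<le> s n" and t: "(\<lambda>n. (s n)\<^sup>2 * b n - t n) \<longlonglongrightarrow> 0"
  shows "z > 0 \<Longrightarrow> eventually (\<lambda>n. b n > z) sequentially \<Longrightarrow> eventually (\<lambda>n. t n \<ge> c\<^sup>2 * z / 2) sequentially"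
    and "z < 0 \<Longrightarrow> eventually (\<lambda>n. b n < z) sequentially \<Longrightarrow> eventually (\<lambda>n. t n \<le> c\<^sup>2 * z / 2) sequentially"
proof -
  have ev: "eventually (\<lambda>n. \<bar>(s n)\<^sup>2 * b n - t n\<bar> < c\<^sup>2 * \<bar>z\<bar> / 2) sequentially" if "z \<noteq> 0"
    using tendstoD[OF t, of "c\<^sup>2 * \<bar>z\<bar> / 2"] c that by (simp add: dist_real_def)
  have cs: "c\<^sup>2 \<le> (s n)\<^sup>2" for n using s[of n] c by (intro power_mono) auto
  show "eventually (\<lambda>n. t n \<ge> c\<^sup>2 * z / 2) sequentially" if z: "z > 0" and b: "eventually (\<lambda>n. b n > z) sequentially"
  proof -
    have E: "eventually (\<lambda>n. \<bar>(s n)\<^sup>2 * b n - t n\<bar> < c\<^sup>2 * \<bar>z\<bar> / 2 \<and> b n > z) sequentially"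
      using eventually_conj[OF ev b] z by simp
    show ?thesis
    proof (rule eventually_mono[OF E])
      fix n assume 1: "\<bar>(s n)\<^sup>2 * b n - t n\<bar> < c\<^sup>2 * \<bar>z\<bar> / 2 \<and> b n > z"
      have "c\<^sup>2 * z \<le> (s n)\<^sup>2 * z" using cs[of n] z by (intro mult_right_mono) auto
      also have "\<dots> \<le> (s n)\<^sup>2 * b n" using 1 by (intro mult_left_mono) auto
      finally have X: "c\<^sup>2 * z \<le> (s n)\<^sup>2 * b n" .
      moreover have "(s n)\<^sup>2 * b n - t n < c\<^sup>2 * \<bar>z\<bar> / 2"
        using 1 abs_less_iff[of "(s n)\<^sup>2 * b n - t n" "c\<^sup>2 * \<bar>z\<bar> / 2"] by linarith
      ultimately show "t n \<ge> c\<^sup>2 * z / 2" using z by linarith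
    qed
  qed
  show "eventually (\<lambda>n. t n \<le> c\<^sup>2 * z / 2) sequentially" if z: "z < 0" and b: "eventually (\<lambda>n. b n < z) sequentially"
  proof -
    have E: "eventually (\<lambda>n. \<bar>(s n)\<^sup>2 * b n - t n\<bar> < c\<^sup>2 * \<bar>z\<bar> / 2 \<and> b n < z) sequentially"
      using eventually_conj[OF ev b] z by simp
    show ?thesis
    proof (rule eventually_mono[OF E])
      fix n assume 1: "\<bar>(s n)\<^sup>2 * b n - t n\<bar> < c\<^sup>2 * \<bar>z\<bar> / 2 \<and> b n < z"
      have "(s n)\<^sup>2 * b n \<le> (s n)\<^sup>2 * z" using 1 by (intro mult_left_mono) auto
      also have "\<dots> \<le> c\<^sup>2 * z" using cs[of n] z by (intro mult_right_mono_neg) auto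
      finally have X: "(s n)\<^sup>2 * b n \<le> c\<^sup>2 * z" .
      moreover have "- ((s n)\<^sup>2 * b n - t n) < c\<^sup>2 * \<bar>z\<bar> / 2"
        using 1 abs_less_iff[of "(s n)\<^sup>2 * b n - t n" "c\<^sup>2 * \<bar>z\<bar> / 2"] by linarith
      ultimately show "t n \<le> c\<^sup>2 * z / 2" using z by linarith
    qed
  qed
qed

lemma h1: "(r::real) > 0 \<Longrightarrow> q \<le> r * a \<Longrightarrow> q / r \<le> a" by (simp add: pos_divide_le_eq mult.commute)
lemma h2: "(r::real) > 0 \<Longrightarrow> r * a \<le> q \<Longrightarrow> a \<le> q / r" by (simp add: pos_le_divide_eq mult.commute)
lemma h3: "(r::real) < 0 \<Longrightarrow> q \<le> r * a \<Longrightarrow> a \<le> q / r" by (simp add: neg_le_divide_eq mult.commute)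
lemma h4: "(r::real) < 0 \<Longrightarrow> r * a \<le> q \<Longrightarrow> q / r \<le> a" by (simp add: neg_divide_le_eq mult.commute)

lemma relinv_pp: "r > 0 \<Longrightarrow> relinv r Lpos Lpos"
  unfolding relinv_def
proof (intro allI impI)
  fix a b s c M assume r: "r > 0" and c: "(c::real) > 0" and s: "\<forall>n. c \<le> s n \<and> s n \<le> M"
    and t: "(\<lambda>n. (s n)\<^sup>2 * b n - r * a n) \<longlonglongrightarrow> 0" and B: "Lpos b"
  obtain z where z: "z > 0" "eventually (\<lambda>n. b n > z) sequentially" using Lpos_ev[OF B] by blast
  have "eventually (\<lambda>n. r * a n \<ge> c\<^sup>2 * z / 2) sequentially" using rel_ev(1)[OF c _ t z] s by blast
  then have "eventually (\<lambda>n. a n \<ge> (c\<^sup>2 * z / 2) / r) sequentially"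
    by (rule eventually_mono) (rule h1[OF r])
  then show "Lpos a" by (rule Lpos_of[rotated]) (use r c z in \<open>intro divide_pos_pos, simp_all add: mult_pos_neg mult_pos_pos\<close>)
qed

lemma relinv_nn: "r > 0 \<Longrightarrow> relinv r Lneg Lneg"
  unfolding relinv_def
proof (intro allI impI)
  fix a b s c M assume r: "r > 0" and c: "(c::real) > 0" and s: "\<forall>n. c \<le> s n \<and> s n \<le> M"
    and t: "(\<lambda>n. (s n)\<^sup>2 * b n - r * a n) \<longlonglongrightarrow> 0" and B: "Lneg b"
  obtain z where z: "z < 0" "eventually (\<lambda>n. b n < z) sequentially" using Lneg_ev[OF B] by blast
  have "eventually (\<lambda>n. r * a n \<le> c\<^sup>2 * z / 2) sequentially" using rel_ev(2)[OF c _ t z] s by blast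
  then have "eventually (\<lambda>n. a n \<le> (c\<^sup>2 * z / 2) / r) sequentially"
    by (rule eventually_mono) (rule h2[OF r])
  then show "Lneg a" by (rule Lneg_of[rotated]) (use r c z in \<open>intro divide_neg_pos, simp_all add: mult_pos_neg mult_pos_pos\<close>)
qed

lemma relinv_np: "r < 0 \<Longrightarrow> relinv r Lneg Lpos"
  unfolding relinv_def
proof (intro allI impI)
  fix a b s c M assume r: "r < 0" and c: "(c::real) > 0" and s: "\<forall>n. c \<le> s n \<and> s n \<le> M"
    and t: "(\<lambda>n. (s n)\<^sup>2 * b n - r * a n) \<longlonglongrightarrow> 0" and B: "Lpos b"
  obtain z where z: "z > 0" "eventually (\<lambda>n. b n > z) sequentially" using Lpos_ev[OF B] by blast
  have "eventually (\<lambda>n. r * a n \<ge> c\<^sup>2 * z / 2) sequentially" using rel_ev(1)[OF c _ t z] s by blast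
  then have "eventually (\<lambda>n. a n \<le> (c\<^sup>2 * z / 2) / r) sequentially"
    by (rule eventually_mono) (rule h3[OF r])
  then show "Lneg a" by (rule Lneg_of[rotated]) (use r c z in \<open>intro divide_pos_neg, simp_all add: mult_pos_neg mult_pos_pos\<close>)
qed

lemma relinv_pn: "r < 0 \<Longrightarrow> relinv r Lpos Lneg"
  unfolding relinv_def
proof (intro allI impI)
  fix a b s c M assume r: "r < 0" and c: "(c::real) > 0" and s: "\<forall>n. c \<le> s n \<and> s n \<le> M"
    and t: "(\<lambda>n. (s n)\<^sup>2 * b n - r * a n) \<longlonglongrightarrow> 0" and B: "Lneg b"
  obtain z where z: "z < 0" "eventually (\<lambda>n. b n < z) sequentially" using Lneg_ev[OF B] by blast
  have "eventually (\<lambda>n. r * a n \<le> c\<^sup>2 * z / 2) sequentially" using rel_ev(2)[OF c _ t z] s by blast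
  then have "eventually (\<lambda>n. a n \<ge> (c\<^sup>2 * z / 2) / r) sequentially"
    by (rule eventually_mono) (rule h4[OF r])
  then show "Lpos a" by (rule Lpos_of[rotated]) (use r c z in \<open>intro divide_neg_neg, simp_all add: mult_pos_neg mult_pos_pos\<close>)
qed


definition tprop where
  "tprop ip S l W Pr \<longleftrightarrow> (\<forall>x y. (\<forall>n. (x n, y n) \<in> S \<and> norm (x n) = 1) \<longrightarrow> (W \<longrightarrow> weakly_to_zero x) \<longrightarrow>
     (\<lambda>n. y n - l *\<^sub>C x n) \<longlonglongrightarrow> 0 \<longrightarrow> Pr (\<lambda>n. Re (ip (x n) (x n))))"

definition gset where
  "gset ip S W Pr = {l \<in> spectrum_op S. l \<in> approx_point_spectrum S \<and> tprop ip S l W Pr}"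

lemma gset_eqs:
  "spec_pos_type ip S = gset ip S False Lpos" "spec_neg_type ip S = gset ip S False Lneg"
  "spec_pi_plus ip S = gset ip S True Lpos" "spec_pi_minus ip S = gset ip S True Lneg"
  unfolding spec_pos_type_def spec_neg_type_def spec_pi_plus_def spec_pi_minus_def gset_def tprop_def
    Lpos_def Lneg_def by simp_all

lemma ap_spec:
  fixes S :: "('a::complex_normed_vector \<times> 'a) set"
  assumes "l \<in> approx_point_spectrum S" shows "l \<in> spectrum_op S"
proof (rule ccontr)
  assume "l \<notin> spectrum_op S"
  then obtain C where C: "\<And>x y. (x, y) \<in> S \<Longrightarrow> norm x \<le> C * norm (y - l *\<^sub>C x)"
    unfolding spectrum_op_def resolvent_set_def by blast
  obtain x y where xy: "\<And>n. (x n, y n) \<in> S" "\<And>n. norm (x n) = 1" and t: "(\<lambda>n. y n - l *\<^sub>C x n) \<longlonglongrightarrow> 0"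
    using assms unfolding approx_point_spectrum_def by blast
  have "eventually (\<lambda>n. norm (y n - l *\<^sub>C x n) < 1 / (\<bar>C\<bar> + 1)) sequentially"
    using tendstoD[OF t, of "1 / (\<bar>C\<bar> + 1)"] by (simp add: dist_norm)
  then obtain n where n: "norm (y n - l *\<^sub>C x n) < 1 / (\<bar>C\<bar> + 1)" using eventually_sequentially by auto
  have "1 \<le> C * norm (y n - l *\<^sub>C x n)" using C[OF xy(1)[of n]] xy(2)[of n] by simp
  also have "\<dots> \<le> \<bar>C\<bar> * norm (y n - l *\<^sub>C x n)" by (intro mult_right_mono) auto
  also have "\<dots> \<le> \<bar>C\<bar> * (1 / (\<bar>C\<bar> + 1))" using n by (intro mult_left_mono) auto
  also have "\<dots> < 1" by (simp add: field_simps)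
  finally show False by simp
qed

context pq
begin

lemma approx_fwd:
  assumes l: "l \<noteq> 0" and a: "l \<in> approx_point_spectrum (P O Q)"
  shows "l \<in> approx_point_spectrum (Q O P)"
proof -
  obtain x z where xz: "\<And>n. (x n, z n) \<in> P O Q" "\<And>n. norm (x n) = 1" and t: "(\<lambda>n. z n - l *\<^sub>C x n) \<longlonglongrightarrow> 0"
    using a unfolding approx_point_spectrum_def by blast
  have "\<forall>n. \<exists>u. (x n, u) \<in> P \<and> (u, z n) \<in> Q" using xz(1) by blast
  then have "\<exists>u. \<forall>n. (x n, u n) \<in> P \<and> (u n, z n) \<in> Q" by (rule choice)
  then obtain u where u0: "\<forall>n. (x n, u n) \<in> P \<and> (u n, z n) \<in> Q" by blast
  have u: "\<And>n. (x n, u n) \<in> P" "\<And>n. (u n, z n) \<in> Q" using u0 by auto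
  obtain y v w s c M where H0: "(\<forall>n. (y n, v n) \<in> Q \<and> (v n, w n) \<in> P \<and> norm (y n) = 1) \<and>
     (\<lambda>n. w n - l *\<^sub>C y n) \<longlonglongrightarrow> 0 \<and> c > 0 \<and> (\<forall>n. c \<le> s n \<and> s n \<le> M) \<and>
     (\<lambda>n. complex_of_real ((s n)\<^sup>2) * ip (y n) (y n) - cnj l * ip (x n) (x n)) \<longlonglongrightarrow> 0 \<and>
     (weakly_to_zero x \<longrightarrow> weakly_to_zero y)"
    using transfer[OF l u xz(2) t] by blast
  have H: "\<forall>n. (y n, v n) \<in> Q \<and> (v n, w n) \<in> P \<and> norm (y n) = 1"
    "(\<lambda>n. w n - l *\<^sub>C y n) \<longlonglongrightarrow> 0" using H0 by auto
  have "\<forall>n. (y n, w n) \<in> Q O P \<and> norm (y n) = 1" using H(1) by blast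
  then show ?thesis unfolding approx_point_spectrum_def using H(2) by blast
qed

lemma prop_back:
  assumes lr: "l = complex_of_real r" and r: "r \<noteq> 0" and tB: "tprop ip (Q O P) l W PB"
    and inv: "relinv r PA PB"
  shows "tprop ip (P O Q) l W PA"
  unfolding tprop_def
proof (intro allI impI)
  fix x z assume xz: "\<forall>n. (x n, z n) \<in> P O Q \<and> norm (x n) = 1" and wx: "W \<longrightarrow> weakly_to_zero x"
    and t: "(\<lambda>n. z n - l *\<^sub>C x n) \<longlonglongrightarrow> 0"
  have l: "l \<noteq> 0" using lr r by simp
  have "\<forall>n. \<exists>u. (x n, u) \<in> P \<and> (u, z n) \<in> Q" using xz by blast
  then have "\<exists>u. \<forall>n. (x n, u n) \<in> P \<and> (u n, z n) \<in> Q" by (rule choice)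
  then obtain u where u0: "\<forall>n. (x n, u n) \<in> P \<and> (u n, z n) \<in> Q" by blast
  have u: "\<And>n. (x n, u n) \<in> P" "\<And>n. (u n, z n) \<in> Q" using u0 by auto
  have xn: "\<And>n. norm (x n) = 1" using xz by blast
  obtain y v w s c M where H0: "(\<forall>n. (y n, v n) \<in> Q \<and> (v n, w n) \<in> P \<and> norm (y n) = 1) \<and>
     (\<lambda>n. w n - l *\<^sub>C y n) \<longlonglongrightarrow> 0 \<and> c > 0 \<and> (\<forall>n. c \<le> s n \<and> s n \<le> M) \<and>
     (\<lambda>n. complex_of_real ((s n)\<^sup>2) * ip (y n) (y n) - cnj l * ip (x n) (x n)) \<longlonglongrightarrow> 0 \<and>
     (weakly_to_zero x \<longrightarrow> weakly_to_zero y)"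
    using transfer[OF l u xn t] by blast
  have H: "\<forall>n. (y n, v n) \<in> Q \<and> (v n, w n) \<in> P \<and> norm (y n) = 1"
     "(\<lambda>n. w n - l *\<^sub>C y n) \<longlonglongrightarrow> 0" "c > 0" "\<forall>n. c \<le> s n \<and> s n \<le> M"
     "(\<lambda>n. complex_of_real ((s n)\<^sup>2) * ip (y n) (y n) - cnj l * ip (x n) (x n)) \<longlonglongrightarrow> 0"
     "weakly_to_zero x \<longrightarrow> weakly_to_zero y" using H0 by auto
  have PBy: "PB (\<lambda>n. Re (ip (y n) (y n)))"
  proof (rule tB[unfolded tprop_def, rule_format])
    show "(y n, w n) \<in> Q O P \<and> norm (y n) = 1" for n using H(1) by blast
    show "weakly_to_zero y" if W using H(6) wx that by blast
    show "(\<lambda>n. w n - l *\<^sub>C y n) \<longlonglongrightarrow> 0" by (rule H(2))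
  qed
  have "(\<lambda>n. Re (complex_of_real ((s n)\<^sup>2) * ip (y n) (y n) - cnj l * ip (x n) (x n))) \<longlonglongrightarrow> Re 0"
    by (rule tendsto_Re[OF H(5)])
  then have rel: "(\<lambda>n. (s n)\<^sup>2 * Re (ip (y n) (y n)) - r * Re (ip (x n) (x n))) \<longlonglongrightarrow> 0"
    unfolding lr by simp
  show "PA (\<lambda>n. Re (ip (x n) (x n)))"
    by (rule inv[unfolded relinv_def, rule_format, OF H(3) _ rel PBy]) (use H(4) in blast)
qed

end


lemma bl_ip_left:
  fixes ip :: "'a::complex_normed_vector \<Rightarrow> 'a \<Rightarrow> complex"
  assumes sq: "sesquilinear ip" and K: "ipbound ip K"
  shows "bounded_linear (\<lambda>x. ip x v)"
proof (rule bounded_linear_intro[where K="K * norm v"])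
  show "ip (x + y) v = ip x v + ip y v" for x y by (rule sq_add_left[OF sq])
  show "ip (r *\<^sub>R x) v = r *\<^sub>R ip x v" for r x
    by (simp add: scaleR_scaleC sq_scale_left[OF sq] scaleR_conv_of_real)
  show "norm (ip x v) \<le> norm x * (K * norm v)" for x
  proof -
    have "cmod (ip x v) \<le> K * norm x * norm v" using K unfolding ipbound_def by blast
    then show ?thesis by (simp add: mult_ac)
  qed
qed

lemma bl_ip_right:
  fixes ip :: "'a::complex_normed_vector \<Rightarrow> 'a \<Rightarrow> complex"
  assumes sq: "sesquilinear ip" and K: "ipbound ip K"
  shows "bounded_linear (\<lambda>y. ip w y)"
proof (rule bounded_linear_intro[where K="K * norm w"])
  show "ip w (x + y) = ip w x + ip w y" for x y by (rule sq_add_right[OF sq])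
  show "ip w (r *\<^sub>R x) = r *\<^sub>R ip w x" for r x
    by (simp add: scaleR_scaleC sq_scale_right[OF sq] scaleR_conv_of_real)
  show "norm (ip w x) \<le> norm x * (K * norm w)" for x
    using K unfolding ipbound_def by (simp add: mult_ac)
qed

lemma adjoint_facts:
  fixes ip :: "'a::{complex_normed_vector,banach} \<Rightarrow> 'a \<Rightarrow> complex"
  assumes sq: "sesquilinear ip" and K: "ipbound ip K" and nd: "\<And>v. (\<forall>x. ip x v = 0) \<Longrightarrow> v = 0"
    and dense: "closure (Domain T) = UNIV"
  shows "linear_operator (krein_adjoint ip T)" "closed (krein_adjoint ip T)"
proof -
  let ?A = "krein_adjoint ip T"
  have mem: "(y, z) \<in> ?A \<longleftrightarrow> (\<forall>x w. (x, w) \<in> T \<longrightarrow> ip w y = ip x z)" for y z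
    unfolding krein_adjoint_def by auto
  show "linear_operator ?A" unfolding linear_operator_def
  proof (intro conjI allI impI)
    show "(0, 0) \<in> ?A" unfolding mem by (simp add: sq_zero_right[OF sq])
    show "(x + u, y + v) \<in> ?A" if "(x, y) \<in> ?A" "(u, v) \<in> ?A" for x y u v
      using that unfolding mem by (simp add: sq_add_right[OF sq])
    show "(a *\<^sub>C x, a *\<^sub>C y) \<in> ?A" if "(x, y) \<in> ?A" for a x y
      using that unfolding mem by (simp add: sq_scale_right[OF sq])
    show "y = 0" if "(0, y) \<in> ?A" for y
    proof (rule nd, rule allI)
      fix x
      have D: "Domain T \<subseteq> {x. ip x y = 0}"
        using that unfolding mem by (auto simp: sq_zero_right[OF sq])
      have "closed {x. ip x y = 0}"
        by (intro closed_Collect_eq linear_continuous_on bl_ip_left[OF sq K] continuous_on_const)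
      then have "closure (Domain T) \<subseteq> {x. ip x y = 0}" using D by (rule closure_minimal[rotated])
      then show "ip x y = 0" using dense by auto
    qed
  qed
  show "closed ?A" unfolding closed_sequential_limits
  proof (intro allI impI)
    fix f l assume H: "(\<forall>n. f n \<in> ?A) \<and> f \<longlonglongrightarrow> l"
    obtain y z where l: "l = (y, z)" by fastforce
    have fl: "f \<longlonglongrightarrow> (y, z)" using H l by simp
    have f1: "(\<lambda>n. fst (f n)) \<longlonglongrightarrow> y" using tendsto_fst[OF fl] by simp
    have f2: "(\<lambda>n. snd (f n)) \<longlonglongrightarrow> z" using tendsto_snd[OF fl] by simp
    have "ip w y = ip x z" if xw: "(x, w) \<in> T" for x w
    proof -
      have e: "ip w (fst (f n)) = ip x (snd (f n))" for n
      proof -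
        have "(fst (f n), snd (f n)) \<in> ?A" using H by simp
        then show ?thesis using xw unfolding mem by blast
      qed
      have "(\<lambda>n. ip w (fst (f n))) \<longlonglongrightarrow> ip w y" by (rule bounded_linear.tendsto[OF bl_ip_right[OF sq K] f1])
      moreover have "(\<lambda>n. ip w (fst (f n))) \<longlonglongrightarrow> ip x z"
        unfolding e by (rule bounded_linear.tendsto[OF bl_ip_right[OF sq K] f2])
      ultimately show ?thesis by (rule LIMSEQ_unique)
    qed
    then show "l \<in> ?A" unfolding l mem by blast
  qed
qed


theorem proposition2p7:
  fixes ip :: "'a::{complex_normed_vector, banach} \<Rightarrow> 'a \<Rightarrow> complex"
    and T :: "('a \<times> 'a) set"
  assumes "krein_space ip"
    and "linear_operator T"
    and "closed T"
    and "closure (Domain T) = UNIV"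
    and "resolvent_set (T O krein_adjoint ip T) \<noteq> {}"
    and "resolvent_set (krein_adjoint ip T O T) \<noteq> {}"
  shows "(approx_point_spectrum (T O krein_adjoint ip T) - {0}
           = approx_point_spectrum (krein_adjoint ip T O T) - {0}) \<and>
         (spec_pos_type ip (T O krein_adjoint ip T) \<inter> pos_reals
           = spec_pos_type ip (krein_adjoint ip T O T) \<inter> pos_reals) \<and>
         (spec_neg_type ip (T O krein_adjoint ip T) \<inter> pos_reals
           = spec_neg_type ip (krein_adjoint ip T O T) \<inter> pos_reals) \<and>
         (spec_pos_type ip (T O krein_adjoint ip T) \<inter> neg_reals
           = spec_neg_type ip (krein_adjoint ip T O T) \<inter> neg_reals) \<and>
         (spec_neg_type ip (T O krein_adjoint ip T) \<inter> neg_reals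
           = spec_pos_type ip (krein_adjoint ip T O T) \<inter> neg_reals) \<and>
         (spec_pi_plus ip (T O krein_adjoint ip T) \<inter> pos_reals
           = spec_pi_plus ip (krein_adjoint ip T O T) \<inter> pos_reals) \<and>
         (spec_pi_minus ip (T O krein_adjoint ip T) \<inter> pos_reals
           = spec_pi_minus ip (krein_adjoint ip T O T) \<inter> pos_reals) \<and>
         (spec_pi_plus ip (T O krein_adjoint ip T) \<inter> neg_reals
           = spec_pi_minus ip (krein_adjoint ip T O T) \<inter> neg_reals) \<and>
         (spec_pi_minus ip (T O krein_adjoint ip T) \<inter> neg_reals
           = spec_pi_plus ip (krein_adjoint ip T O T) \<inter> neg_reals)"
proof -
  note kf = krein_facts[OF assms(1)]
  have sq: "sesquilinear ip" by (rule kf(1))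
  obtain K where K: "ipbound ip K" using kf(2) by blast
  have nd: "\<And>v. (\<forall>x. ip x v = 0) \<Longrightarrow> v = 0" by (rule kf(3))
  define Ta where "Ta = krein_adjoint ip T"
  have lTa: "linear_operator Ta" and cTa: "closed Ta"
    unfolding Ta_def using adjoint_facts[OF sq K nd assms(4)] by auto
  have memTa: "\<And>y z x w. (y, z) \<in> Ta \<Longrightarrow> (x, w) \<in> T \<Longrightarrow> ip w y = ip x z"
    unfolding Ta_def krein_adjoint_def by blast
  interpret X: pq ip T Ta K
  proof
    show "ip u y = ip x v" if "(x, u) \<in> T" "(y, v) \<in> Ta" for x u y v using memTa that by blast
  qed (use sq K assms(2,3,5,6) lTa cTa in \<open>simp_all add: Ta_def\<close>)
  interpret Y: pq ip Ta T K
  proof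
    show "ip u y = ip x v" if "(x, u) \<in> Ta" "(y, v) \<in> T" for x u y v
    proof -
      have "ip v x = ip y u" using memTa that by blast
      then show ?thesis using sq_conj[OF sq, of x v] sq_conj[OF sq, of u y] by simp
    qed
  qed (use sq K assms(2,3,5,6) lTa cTa in \<open>simp_all add: Ta_def\<close>)
  have G: "gset ip (T O Ta) W PA \<inter> Z = gset ip (Ta O T) W PB \<inter> Z"
    if Z: "\<And>l. l \<in> Z \<Longrightarrow> \<exists>r. l = complex_of_real r \<and> r \<noteq> 0 \<and> relinv r PA PB \<and> relinv r PB PA"
    for W PA PB Z
  proof (intro equalityI subsetI)
    fix l assume l: "l \<in> gset ip (T O Ta) W PA \<inter> Z"
    then obtain r where r: "l = complex_of_real r" "r \<noteq> 0" "relinv r PA PB" "relinv r PB PA" using Z by blast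
    have l0: "l \<noteq> 0" using r by simp
    have a: "l \<in> approx_point_spectrum (Ta O T)"
      using X.approx_fwd[OF l0] l unfolding gset_def by blast
    have t: "tprop ip (Ta O T) l W PB"
      using Y.prop_back[OF r(1,2) _ r(4)] l unfolding gset_def by blast
    show "l \<in> gset ip (Ta O T) W PB \<inter> Z" using a t ap_spec[OF a] l unfolding gset_def by blast
  next
    fix l assume l: "l \<in> gset ip (Ta O T) W PB \<inter> Z"
    then obtain r where r: "l = complex_of_real r" "r \<noteq> 0" "relinv r PA PB" "relinv r PB PA" using Z by blast
    have l0: "l \<noteq> 0" using r by simp
    have a: "l \<in> approx_point_spectrum (T O Ta)"
      using Y.approx_fwd[OF l0] l unfolding gset_def by blast
    have t: "tprop ip (T O Ta) l W PA"
      using X.prop_back[OF r(1,2) _ r(3)] l unfolding gset_def by blast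
    show "l \<in> gset ip (T O Ta) W PA \<inter> Z" using a t ap_spec[OF a] l unfolding gset_def by blast
  qed
  have pos: "\<exists>r. l = complex_of_real r \<and> r \<noteq> 0 \<and> relinv r Lpos Lpos \<and> relinv r Lpos Lpos"
    "\<exists>r. l = complex_of_real r \<and> r \<noteq> 0 \<and> relinv r Lneg Lneg \<and> relinv r Lneg Lneg"
    if lp: "l \<in> pos_reals" for l
  proof -
    obtain r where r: "r > 0" "l = complex_of_real r" using lp unfolding pos_reals_def by auto
    show "\<exists>r. l = complex_of_real r \<and> r \<noteq> 0 \<and> relinv r Lpos Lpos \<and> relinv r Lpos Lpos"
      using r relinv_pp[OF r(1)] by auto
    show "\<exists>r. l = complex_of_real r \<and> r \<noteq> 0 \<and> relinv r Lneg Lneg \<and> relinv r Lneg Lneg"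
      using r relinv_nn[OF r(1)] by auto
  qed
  have neg: "\<exists>r. l = complex_of_real r \<and> r \<noteq> 0 \<and> relinv r Lpos Lneg \<and> relinv r Lneg Lpos"
    "\<exists>r. l = complex_of_real r \<and> r \<noteq> 0 \<and> relinv r Lneg Lpos \<and> relinv r Lpos Lneg"
    if lp: "l \<in> neg_reals" for l
  proof -
    obtain r where r: "r < 0" "l = complex_of_real r" using lp unfolding neg_reals_def by auto
    show "\<exists>r. l = complex_of_real r \<and> r \<noteq> 0 \<and> relinv r Lpos Lneg \<and> relinv r Lneg Lpos"
      using r relinv_pn[OF r(1)] relinv_np[OF r(1)] by auto
    show "\<exists>r. l = complex_of_real r \<and> r \<noteq> 0 \<and> relinv r Lneg Lpos \<and> relinv r Lpos Lneg"
      using r relinv_pn[OF r(1)] relinv_np[OF r(1)] by auto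
  qed
  have i: "approx_point_spectrum (T O Ta) - {0} = approx_point_spectrum (Ta O T) - {0}"
    using X.approx_fwd Y.approx_fwd by blast
  show ?thesis
    unfolding gset_eqs Ta_def[symmetric]
    by (intro conjI i G; (erule pos(1) | erule pos(2) | erule neg(1) | erule neg(2)))
qed


end
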